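(* Let $r:\Sigma\to(0,\infty)$ be continuous and let $M,M'$ be one-step locally constant cocycles on $\Sigma=\{1,2,3\}^{\mathbb Z}$ such that $\lambda(\overline 1)\neq0$. Then for every $i\in\{1,2,3\}$ and every $\varepsilon>0$ there exists a periodic orbit of $(\Sigma_r,\sigma_r)$ whose Lyapunov exponents $\lambda,\lambda'$ for the suspended cocycles $\mathcal A,\mathcal A'$ satisfy $|\lambda-\lambda(\overline i)|<\varepsilon$, $|\lambda'-\lambda'(\overline i)|<\varepsilon$ and $\lambda\neq0$.
   Context: $\Sigma=\{1,2,3\}^{\mathbb Z}$ with the shift $\sigma$; for a finite word $w$, $\overline w$ is the periodic sequence repeating $w$. For continuous $r:\Sigma\to(0,\infty)$, the suspension $\Sigma_r$ is the quotient of $\Sigma\times\mathbb R$ by $(\underline\varepsilon,s)\sim(\sigma\underline\varepsilon,s-r(\underline\varepsilon))$, with flow $\sigma_r^t(\underline\varepsilon,s)=(\underline\varepsilon,s+t)$. A one-step locally constant cocycle $M$ is given by nine matrices $M_{i,j}\in\mathrm{SL}(2,\mathbb R)$, $i,j\in\{1,2,3\}$, via $M^1(\underline\varepsilon)=M_{\varepsilon_0,\varepsilon_1}$ and $M^n(\underline\varepsilon)=M_{\varepsilon_{n-1},\varepsilon_n}\cdots M_{\varepsilon_0,\varepsilon_1}$. Its suspension $\mathcal A$ is the cocycle over $\sigma_r^t$ on the bundle obtained as the quotient of $\Sigma\times\mathbb R\times\mathbb R^2$ by $(\underline\varepsilon,s,v)\sim(\sigma\underline\varepsilon,s-r(\underline\varepsilon),M_{\varepsilon_0,\varepsilon_1}v)$,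 induced by $(\underline\varepsilon,s,v)\mapsto(\underline\varepsilon,s+t,v)$; $\mathcal A'$ is defined from $M'$ in the same way. The Lyapunov exponent for $\mathcal A$ of the periodic orbit of $\sigma_r$ through $(\underline\varepsilon,0)$, where $\underline\varepsilon=\overline{\varepsilon_0\cdots\varepsilon_{n-1}}$, is $\log\mathrm{sr}(M^n(\underline\varepsilon))/\sum_{k=0}^{n-1}r(\sigma^k\underline\varepsilon)$, $\mathrm{sr}$ denoting the spectral radius. In particular $\lambda(\overline i)=\log\mathrm{sr}(M_{i,i})/r(\overline i)$, and $\lambda'(\overline i)$ is defined likewise with $M'$. *)

theory Defs
  imports "HOL-Analysis.Analysis"
begin

text \<open>Symbols 1,2,3; sequences are int-indexed nat-valued, product topology
  (Function_Topology), nat carries its discrete topology.\<close>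
definition Sigma3 :: "(int \<Rightarrow> nat) set" where
  "Sigma3 = {x. \<forall>n. x n \<in> {1,2,3}}"

definition shift :: "(int \<Rightarrow> nat) \<Rightarrow> (int \<Rightarrow> nat)" where
  "shift x = (\<lambda>n. x (n + 1))"

definition per :: "nat list \<Rightarrow> (int \<Rightarrow> nat)" where
  "per w = (\<lambda>n. w ! nat (n mod int (length w)))"

fun cpow :: "(nat \<Rightarrow> nat \<Rightarrow> real^2^2) \<Rightarrow> (int \<Rightarrow> nat) \<Rightarrow> nat \<Rightarrow> real^2^2" where
  "cpow M x 0 = mat 1"
| "cpow M x (Suc n) = M (x (int n)) (x (int n + 1)) ** cpow M x n"

definition cmat :: "real^2^2 \<Rightarrow> complex^2^2" where
  "cmat A = (\<chi> i j. complex_of_real (A $ i $ j))"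

definition eigenvalues2 :: "real^2^2 \<Rightarrow> complex set" where
  "eigenvalues2 A = {\<mu>. \<exists>v::complex^2. v \<noteq> 0 \<and> cmat A *v v = \<mu> *s v}"

definition sr :: "real^2^2 \<Rightarrow> real" where
  "sr A = Max (cmod ` eigenvalues2 A)"

text \<open>Lyapunov exponent of the periodic orbit of the suspension flow through (per w, 0)\<close>
definition lyap :: "((int \<Rightarrow> nat) \<Rightarrow> real) \<Rightarrow> (nat \<Rightarrow> nat \<Rightarrow> real^2^2) \<Rightarrow> nat list \<Rightarrow> real" where
  "lyap r M w = ln (sr (cpow M (per w) (length w)))
     / (\<Sum>k<length w. r ((shift ^^ k) (per w)))"

end

theory Submission
  imports Defs
begin

definition tr :: "real^2^2 \<Rightarrow> real" where "tr X = X$1$1 + X$2$2"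

lemma mat2_eq: "(X::real^2^2) = Y \<longleftrightarrow> X$1$1 = Y$1$1 \<and> X$1$2 = Y$1$2 \<and> X$2$1 = Y$2$1 \<and> X$2$2 = Y$2$2"
  by (auto simp: vec_eq_iff forall_2)

lemma mm_ent: "((X::real^2^2) ** Y)$i$j = X$i$1 * Y$1$j + X$i$2*Y$2$j"
  by (simp add: matrix_matrix_mult_def sum_2)

lemma mat1_ent: "(mat 1 :: real^2^2)$1$1 = 1" "(mat 1 :: real^2^2)$2$2 = 1"
   "(mat 1 :: real^2^2)$1$2 = 0" "(mat 1 :: real^2^2)$2$1 = 0"
  by (simp_all add: mat_def)

declare [[syntax_ambiguity_warning=false]]
lemmas m2s = mat2_eq mm_ent mat1_ent det_2 tr_def

lemma tr_comm: "tr (X ** Y) = tr (Y ** X)"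
  by (simp add: m2s algebra_simps)

lemma CH: "X ** X = tr X *\<^sub>R X - det X *\<^sub>R mat 1"
  by (subst mat2_eq; simp add: m2s algebra_simps)

lemma tr_add: "tr (X + Y) = tr X + tr Y" by (simp add: m2s)
lemma tr_scale: "tr (c *\<^sub>R X) = c * tr X" by (simp add: m2s algebra_simps)
lemma tr_diff: "tr (X - Y) = tr X - tr Y" by (simp add: m2s)
lemma mm_ladd: fixes X Y Z :: "real^2^2" shows "(X + Y) ** (Z::real^2^2) = X ** Z + Y ** Z" by (subst mat2_eq; simp add: m2s algebra_simps)
lemma mm_radd: fixes X Y Z :: "real^2^2" shows "(Z::real^2^2) ** (X + Y) = Z ** X + Z ** Y" by (subst mat2_eq; simp add: m2s algebra_simps)
lemma mm_ldiff: fixes X Y Z :: "real^2^2" shows "(X - Y) ** (Z::real^2^2) = X ** Z - Y ** Z" by (subst mat2_eq; simp add: m2s algebra_simps)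
lemma mm_rdiff: fixes X Y Z :: "real^2^2" shows "(Z::real^2^2) ** (X - Y) = Z ** X - Z ** Y" by (subst mat2_eq; simp add: m2s algebra_simps)
lemma mm_lscale: fixes X Y Z :: "real^2^2" shows "(c *\<^sub>R X) ** (Z::real^2^2) = c *\<^sub>R (X ** Z)" by (subst mat2_eq; simp add: m2s algebra_simps)
lemma mm_rscale: fixes X Y Z :: "real^2^2" shows "(Z::real^2^2) ** (c *\<^sub>R X) = c *\<^sub>R (Z ** X)" by (subst mat2_eq; simp add: m2s algebra_simps)
lemma tr_mat1: "tr (mat 1) = 2" by (simp add: m2s)

lemma cmat_ent: "cmat A $ i $ j = complex_of_real (A$i$j)" by (simp add: cmat_def)

lemma mv_ent: "((M::complex^2^2) *v v) $ i = M$i$1 * v$1 + M$i$2 * v$2"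
  by (simp add: matrix_vector_mult_def sum_2)

lemma eig_iff:
  "\<mu> \<in> eigenvalues2 A \<longleftrightarrow> \<mu>^2 - complex_of_real (tr A) * \<mu> + complex_of_real (det A) = 0"
proof -
  define a where "a = complex_of_real (A$1$1)"
  define b where "b = complex_of_real (A$1$2)"
  define c where "c = complex_of_real (A$2$1)"
  define d where "d = complex_of_real (A$2$2)"
  have P: "\<mu>^2 - complex_of_real (tr A) * \<mu> + complex_of_real (det A) = (a-\<mu>)*(d-\<mu>) - b*c"
    by (simp add: a_def b_def c_def d_def tr_def det_2 algebra_simps power2_eq_square)
  have ev: "cmat A *v v = \<mu> *s v \<longleftrightarrow> (a-\<mu>)* v$1 + b* v$2 = 0 \<and> c* v$1 + (d-\<mu>)* v$2 = 0" for v
  proof -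
    have r1: "(a-\<mu>)* v$1 + b* v$2 = (a* v$1 + b* v$2) - \<mu> * v$1" by (simp add: algebra_simps)
    have r2: "c* v$1 + (d-\<mu>)* v$2 = (c* v$1 + d* v$2) - \<mu> * v$2" by (simp add: algebra_simps)
    show ?thesis unfolding r1 r2
      by (simp add: vec_eq_iff forall_2 mv_ent cmat_ent a_def b_def c_def d_def)
  qed
  show ?thesis
  proof
    assume "\<mu> \<in> eigenvalues2 A"
    then obtain v :: "complex^2" where v0: "v \<noteq> 0" and e: "(a-\<mu>)* v$1 + b* v$2 = 0" "c* v$1 + (d-\<mu>)* v$2 = 0"
      unfolding eigenvalues2_def using ev by blast
    have 1: "((a-\<mu>)*(d-\<mu>) - b*c) * v$1 = 0"
    proof -
      have "((a-\<mu>)*(d-\<mu>) - b*c) * v$1 = (d-\<mu>)*((a-\<mu>)* v$1 + b* v$2) - b*(c* v$1 + (d-\<mu>)* v$2)"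
        by (simp add: algebra_simps)
      then show ?thesis using e by simp
    qed
    have 2: "((a-\<mu>)*(d-\<mu>) - b*c) * v$2 = 0"
    proof -
      have "((a-\<mu>)*(d-\<mu>) - b*c) * v$2 = (a-\<mu>)*(c* v$1 + (d-\<mu>)* v$2) - c*((a-\<mu>)* v$1 + b* v$2)"
        by (simp add: algebra_simps)
      then show ?thesis using e by simp
    qed
    have "v$1 \<noteq> 0 \<or> v$2 \<noteq> 0" using v0 by (auto simp: vec_eq_iff forall_2)
    then show "\<mu>^2 - complex_of_real (tr A) * \<mu> + complex_of_real (det A) = 0"
      using 1 2 P by auto
  next
    assume "\<mu>^2 - complex_of_real (tr A) * \<mu> + complex_of_real (det A) = 0"
    then have z: "(a-\<mu>)*(d-\<mu>) - b*c = 0" using P by simp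
    define mk :: "complex \<Rightarrow> complex \<Rightarrow> complex^2" where "mk x y = (\<chi> i. if i = 1 then x else y)" for x y
    have mk1: "mk x y $ 1 = x" and mk2: "mk x y $ 2 = y" for x y by (simp_all add: mk_def)
    have mk0: "mk x y \<noteq> 0" if "x \<noteq> 0 \<or> y \<noteq> 0" for x y
      using that by (metis mk1 mk2 zero_index)
    have zz: "c*b + (d-\<mu>)*(\<mu>-a) = 0" "(a-\<mu>)*(\<mu>-d) + b*c = 0"
      using z by (simp_all add: algebra_simps)
    have "\<exists>v::complex^2. v \<noteq> 0 \<and> (a-\<mu>)* v$1 + b* v$2 = 0 \<and> c* v$1 + (d-\<mu>)* v$2 = 0"
    proof (cases "b = 0")
      case False
      have "(a-\<mu>)*b + b*(\<mu>-a) = 0" by (simp add: algebra_simps)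
      then show ?thesis
        using False zz by (intro exI[of _ "mk b (\<mu> - a)"]) (simp add: mk1 mk2 mk0 mult.commute)
    next
      case b0: True
      show ?thesis
      proof (cases "c = 0")
        case False
        have "c*(\<mu>-d) + (d-\<mu>)*c = 0" by (simp add: algebra_simps)
        then show ?thesis
          using False zz b0 by (intro exI[of _ "mk (\<mu> - d) c"]) (simp add: mk1 mk2 mk0 mult.commute)
      next
        case c0: True
        from z b0 c0 have "a = \<mu> \<or> d = \<mu>" by auto
        then show ?thesis
        proof
          assume "a = \<mu>" then show ?thesis
            using b0 c0 by (intro exI[of _ "mk 1 0"]) (simp add: mk1 mk2 mk0)
        next
          assume "d = \<mu>" then show ?thesis
            using b0 c0 by (intro exI[of _ "mk 0 1"]) (simp add: mk1 mk2 mk0)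
        qed
      qed
    qed
    then show "\<mu> \<in> eigenvalues2 A" unfolding eigenvalues2_def using ev by blast
  qed
qed

lemma quad_roots:
  fixes t :: real and z1 z2 z :: complex
  assumes "z1 + z2 = complex_of_real t" "z1 * z2 = 1"
  shows "z^2 - complex_of_real t * z + 1 = 0 \<longleftrightarrow> z = z1 \<or> z = z2"
proof -
  have "z^2 - complex_of_real t * z + 1 = (z - z1) * (z - z2)"
    using assms by (simp add: algebra_simps power2_eq_square) (metis add.commute distrib_left mult.commute)
  then show ?thesis by simp
qed

lemma sr_formula:
  assumes "det A = 1"
  shows "sr A = (if (tr A)^2 < 4 then 1 else (\<bar>tr A\<bar> + sqrt ((tr A)^2 - 4))/2)"
proof -
  define t where "t = tr A"
  have E: "eigenvalues2 A = {z. z^2 - complex_of_real t * z + 1 = 0}"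
    using eig_iff[of _ A] assms by (auto simp: t_def)
  show ?thesis
  proof (cases "t^2 < 4")
    case True
    define s where "s = sqrt (4 - t^2)"
    have s2: "s^2 = 4 - t^2" using True by (simp add: s_def)
    define z1 where "z1 = Complex (t/2) (s/2)"
    define z2 where "z2 = Complex (t/2) (-s/2)"
    have "z1 + z2 = complex_of_real t" by (simp add: z1_def z2_def complex_eq_iff)
    moreover have "z1 * z2 = 1"
      using s2 by (simp add: z1_def z2_def complex_eq_iff power2_eq_square field_simps)
    ultimately have "eigenvalues2 A = {z1, z2}" using E quad_roots by auto
    moreover have "cmod z1 = 1" "cmod z2 = 1"
      using s2 by (simp_all add: z1_def z2_def cmod_def power_divide field_simps)
    ultimately show ?thesis using True by (simp add: sr_def t_def)
  next
    case False
    define s where "s = sqrt (t^2 - 4)"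
    have s2: "s^2 = t^2 - 4" and s0: "s \<ge> 0" using False by (simp_all add: s_def)
    define z1 where "z1 = complex_of_real ((t+s)/2)"
    define z2 where "z2 = complex_of_real ((t-s)/2)"
    have "(t+s)/2 + (t-s)/2 = t" by (simp add: field_simps)
    then have "z1 + z2 = complex_of_real t" unfolding z1_def z2_def by (metis of_real_add)
    moreover have "z1 * z2 = 1"
    proof -
      have "((t+s)/2) * ((t-s)/2) = (t^2 - s^2)/4" by (simp add: power2_eq_square field_simps)
      then have "((t+s)/2) * ((t-s)/2) = 1" using s2 by simp
      then show ?thesis unfolding z1_def z2_def by (metis of_real_1 of_real_mult)
    qed
    ultimately have "eigenvalues2 A = {z1, z2}" using E quad_roots by auto
    then have srm: "sr A = max (cmod z1) (cmod z2)" by (simp add: sr_def)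
    have m1: "cmod z1 = \<bar>(t+s)/2\<bar>" unfolding z1_def by (rule norm_of_real)
    have m2: "cmod z2 = \<bar>(t-s)/2\<bar>" unfolding z2_def by (rule norm_of_real)
    have "max \<bar>(t+s)/2\<bar> \<bar>(t-s)/2\<bar> = (\<bar>t\<bar> + s)/2"
    proof (cases "t \<ge> 0")
      case True
      then have "\<bar>(t+s)/2\<bar> = (\<bar>t\<bar> + s)/2" "\<bar>(t-s)/2\<bar> \<le> (\<bar>t\<bar> + s)/2" using s0 by auto
      then show ?thesis by (simp add: max.absorb1 max.absorb2)
    next
      case False
      then have "\<bar>(t-s)/2\<bar> = (\<bar>t\<bar> + s)/2" "\<bar>(t+s)/2\<bar> \<le> (\<bar>t\<bar> + s)/2" using s0 by auto
      then show ?thesis by (simp add: max.absorb1 max.absorb2)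
    qed
    then show ?thesis using False srm m1 m2 by (simp add: t_def s_def)
  qed
qed

lemma sq_lt4: "(t::real)^2 < 4 \<longleftrightarrow> \<bar>t\<bar> < 2"
  by (metis abs_le_square_iff abs_numeral not_le power2_eq_square real_sqrt_four real_sqrt_less_iff real_sqrt_abs)

lemma aux3: "2 \<le> (a::real) \<Longrightarrow> s = (a+q)/2 \<Longrightarrow> q \<le> a \<Longrightarrow> 0 \<le> q \<Longrightarrow> 1 \<le> s \<and> a \<le> 2 * s \<and> s \<le> a+1"
  by simp

lemma sr_bounds:
  assumes "det A = 1"
  shows "sr A \<ge> 1 \<and> \<bar>tr A\<bar> \<le> 2 * sr A \<and> sr A \<le> \<bar>tr A\<bar> + 1"
proof (cases "(tr A)^2 < 4")
  case True
  then have "\<bar>tr A\<bar> < 2" by (simp add: sq_lt4)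
  then show ?thesis using True sr_formula[OF assms] by simp
next
  case False
  define t where "t = tr A"
  have s: "sqrt (t^2 - 4) \<le> \<bar>t\<bar>" using real_sqrt_le_mono[of "t^2-4" "t^2"] by simp
  have s0: "sqrt (t^2 - 4) \<ge> 0" using False by (simp add: t_def)
  have "\<bar>t\<bar> \<ge> 2" using False sq_lt4 t_def by auto
  moreover have "sr A = (\<bar>t\<bar> + sqrt (t^2 - 4))/2" using False sr_formula[OF assms] by (simp add: t_def)
  ultimately show ?thesis using s s0 aux3[of "\<bar>tr A\<bar>" "sr A" "sqrt ((tr A)^2 - 4)"] unfolding t_def by blast
qed

lemma sr_ell: "det A = 1 \<Longrightarrow> \<bar>tr A\<bar> \<le> 2 \<Longrightarrow> sr A = 1"
proof -
  assume a: "det A = 1" "\<bar>tr A\<bar> \<le> 2"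
  show ?thesis
  proof (cases "(tr A)^2 < 4")
    case False
    then have "\<bar>tr A\<bar> = 2" using a(2) sq_lt4 by auto
    then have "(tr A)^2 = 4" by (metis abs_numeral power2_abs power2_eq_square numeral_times_numeral semiring_norm(12) semiring_norm(13))
    then show ?thesis using sr_formula[OF a(1)] \<open>\<bar>tr A\<bar> = 2\<close> by simp
  qed (simp add: sr_formula[OF a(1)])
qed

lemma sr_hyp: "det A = 1 \<Longrightarrow> \<bar>tr A\<bar> > 2 \<Longrightarrow> sr A = (\<bar>tr A\<bar> + sqrt ((tr A)^2 - 4))/2"
  using sr_formula[of A] sq_lt4[of "tr A"] by auto

lemma sr_gt1: "det A = 1 \<Longrightarrow> \<bar>tr A\<bar> > 2 \<Longrightarrow> sr A > 1"
  using sr_bounds[of A] by linarith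

fun lp :: "(nat \<Rightarrow> nat \<Rightarrow> real^2^2) \<Rightarrow> nat list \<Rightarrow> real^2^2" where
  "lp M [] = mat 1" | "lp M [a] = mat 1" | "lp M (a#b#xs) = lp M (b#xs) ** M a b"

fun mpow :: "real^2^2 \<Rightarrow> nat \<Rightarrow> real^2^2" where
  "mpow X 0 = mat 1" | "mpow X (Suc n) = mpow X n ** X"

lemma lp_split: "lp M (xs @ a # ys) = lp M (a # ys) ** lp M (xs @ [a])"
proof (induction xs)
  case Nil then show ?case by simp
next
  case (Cons x xs)
  show ?case
  proof (cases xs)
    case Nil then show ?thesis by simp
  next
    case (Cons y zs)
    then show ?thesis using Cons.IH by (simp add: matrix_mul_assoc)
  qed
qed

lemma lp_rep: "lp M (replicate (Suc n) i) = mpow (M i i) n"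
  by (induction n) auto

lemma cpow_lp: "cpow M x n = lp M (map (\<lambda>k. x (int k)) [0..<Suc n])"
proof (induction n)
  case 0 then show ?case by simp
next
  case (Suc n)
  have "map (\<lambda>k. x (int k)) [0..<Suc (Suc n)] = map (\<lambda>k. x (int k)) [0..<n] @ x (int n) # [x (int n + 1)]"
    by (simp add: add.commute)
  then have "lp M (map (\<lambda>k. x (int k)) [0..<Suc (Suc n)]) = M (x (int n)) (x (int n + 1)) ** lp M (map (\<lambda>k. x (int k)) [0..<Suc n])"
    using lp_split[of M "map (\<lambda>k. x (int k)) [0..<n]" "x (int n)" "[x (int n + 1)]"] by simp
  then show ?case using Suc by (simp add: add.commute)
qed

lemma per_int: "w \<noteq> [] \<Longrightarrow> per w (int k) = w ! (k mod length w)"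
  unfolding per_def by (metis nat_int of_nat_mod)

lemma per_list: assumes "w \<noteq> []"
  shows "map (\<lambda>k. per w (int k)) [0..<Suc (length w)] = w @ [w ! 0]"
proof (rule nth_equalityI)
  fix k assume "k < length (map (\<lambda>k. per w (int k)) [0..<Suc (length w)])"
  then have k: "k \<le> length w" by simp
  show "map (\<lambda>k. per w (int k)) [0..<Suc (length w)] ! k = (w @ [w ! 0]) ! k"
  proof (cases "k = length w")
    case True then show ?thesis using assms by (simp add: per_int nth_append)
  next
    case False then have "k < length w" using k by simp
    then show ?thesis using assms by (simp add: per_int nth_append del: upt_Suc)
  qed
qed simp

definition exc :: "(nat \<Rightarrow> nat \<Rightarrow> real^2^2) \<Rightarrow> nat \<Rightarrow> nat list \<Rightarrow> real^2^2" where
  "exc M i u = lp M (i # u @ [i])"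

lemma cpow_word:
  "cpow M (per (replicate (Suc n) i @ u)) (length (replicate (Suc n) i @ u)) = exc M i u ** mpow (M i i) n"
proof -
  define w where "w = replicate (Suc n) i @ u"
  have w0: "w \<noteq> []" and w00: "w ! 0 = i" by (simp_all add: w_def)
  have "cpow M (per w) (length w) = lp M (w @ [i])"
    using cpow_lp per_list[OF w0] w00 by simp
  also have "w @ [i] = replicate n i @ i # (u @ [i])" by (simp add: w_def replicate_append_same[symmetric])
  also have "lp M \<dots> = lp M (i # u @ [i]) ** lp M (replicate n i @ [i])" by (rule lp_split)
  also have "replicate n i @ [i] = replicate (Suc n) i" by (simp add: replicate_append_same)
  finally show ?thesis by (simp add: w_def exc_def lp_rep del: replicate_Suc)
qed

lemma exc_app: "exc M i (u @ i # v) = exc M i v ** exc M i u"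
  unfolding exc_def using lp_split[of M "i # u" i "v @ [i]"] by simp

lemma exc_ones: "exc M i (replicate (Suc m) 1) = (M 1 i ** mpow (M 1 1) m) ** M i 1"
proof -
  have e: "1 # replicate m 1 @ [i] = replicate m 1 @ 1 # [i]"
    by (metis append.assoc append_Cons append_Nil replicate_append_same)
  have sp: "lp M (replicate m 1 @ 1 # [i]) = lp M [1, i] ** lp M (replicate m 1 @ [1])" by (rule lp_split)
  have r: "replicate m 1 @ [1] = replicate (Suc m) (1::nat)" by (simp only: replicate_append_same replicate_Suc)
  have a: "lp M (1 # replicate m 1 @ [i]) = M 1 i ** mpow (M 1 1) m"
    unfolding e sp r lp_rep by simp
  show ?thesis unfolding exc_def using a by simp
qed

lemma shift_pow: "(shift ^^ k) x = (\<lambda>j. x (j + int k))"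
  by (induction k arbitrary: x) (auto simp: shift_def algebra_simps)

lemma det_mpow: "det (mpow X n) = det X ^ n"
  by (induction n) (auto simp: det_mul)

lemma det_lp: "(\<forall>a\<in>set xs. \<forall>b\<in>set xs. det (M a b) = 1) \<Longrightarrow> det (lp M xs) = 1"
  by (induction M xs rule: lp.induct) (auto simp: det_mul)

lemma mpow_rec: "det X = 1 \<Longrightarrow> mpow X (Suc (Suc k)) = tr X *\<^sub>R mpow X (Suc k) - mpow X k"
proof -
  assume d: "det X = 1"
  have "mpow X (Suc (Suc k)) = mpow X k ** (X ** X)" by (simp add: matrix_mul_assoc)
  also have "\<dots> = mpow X k ** (tr X *\<^sub>R X - mat 1)" using CH[of X] d by simp
  finally show ?thesis by (simp add: mm_rdiff mm_rscale matrix_mul_assoc)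
qed

definition lin_rec :: "real \<Rightarrow> (nat \<Rightarrow> real) \<Rightarrow> bool" where
  "lin_rec t a \<longleftrightarrow> (\<forall>k. a (Suc (Suc k)) = t * a (Suc k) - a k)"

definition QF :: "real \<Rightarrow> (nat \<Rightarrow> real) \<Rightarrow> real" where
  "QF t a = (a 1)^2 - t * a 1 * a 0 + (a 0)^2"

lemma lin_rec_lin: assumes "lin_rec t a" "lin_rec t b" shows "lin_rec t (\<lambda>k. c * a k + d * b k)"
proof -
  have ha: "a (Suc (Suc k)) = t * a (Suc k) - a k" and hb: "b (Suc (Suc k)) = t * b (Suc k) - b k" for k
    using assms by (auto simp: lin_rec_def)
  show ?thesis unfolding lin_rec_def ha hb by (simp add: algebra_simps)
qed

lemma QF_inv: assumes "lin_rec t a"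
  shows "(a (Suc k))^2 - t * a (Suc k) * a k + (a k)^2 = QF t a"
proof (induction k)
  case 0 then show ?case by (simp add: QF_def)
next
  case (Suc k)
  have r: "a (Suc (Suc k)) = t * a (Suc k) - a k" using assms by (simp add: lin_rec_def)
  have "(a (Suc (Suc k)))^2 - t * a (Suc (Suc k)) * a (Suc k) + (a (Suc k))^2
      = (a (Suc k))^2 - t * a (Suc k) * a k + (a k)^2"
    unfolding r by (simp add: algebra_simps power2_eq_square)
  then show ?case using Suc by simp
qed

lemma txy_bound: "\<bar>t\<bar> \<le> 2 \<Longrightarrow> \<bar>t*x*y\<bar> \<le> 2 * \<bar>x\<bar> * \<bar>(y::real)\<bar>"
  by (simp add: abs_mult mult_right_mono mult.assoc)

lemma QF_lower: assumes "\<bar>t\<bar> \<le> 2" shows "(\<bar>x\<bar> - \<bar>y\<bar>)^2 \<le> x^2 - t*x*y + (y::real)^2"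
proof -
  have e: "(\<bar>x\<bar> - \<bar>y\<bar>)^2 = x^2 - 2*\<bar>x\<bar>*\<bar>y\<bar> + y^2"
    by (simp add: power2_eq_square algebra_simps)
  have "t*x*y \<le> 2 * \<bar>x\<bar> * \<bar>y\<bar>" using txy_bound[OF assms, of x y] by linarith
  then show ?thesis unfolding e by linarith
qed

lemma QF_upper: assumes "\<bar>t\<bar> \<le> 2" shows "x^2 - t*x*y + (y::real)^2 \<le> (\<bar>x\<bar> + \<bar>y\<bar>)^2"
proof -
  have e: "(\<bar>x\<bar> + \<bar>y\<bar>)^2 = x^2 + 2*\<bar>x\<bar>*\<bar>y\<bar> + y^2"
    by (simp add: power2_eq_square algebra_simps)
  have "- (t*x*y) \<le> 2 * \<bar>x\<bar> * \<bar>y\<bar>" using txy_bound[OF assms, of x y] by linarith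
  then show ?thesis unfolding e by linarith
qed

lemma QF_nonneg: "\<bar>t\<bar> \<le> 2 \<Longrightarrow> QF t a \<ge> 0"
  unfolding QF_def by (rule order_trans[OF zero_le_power2 QF_lower])

lemma poly_bound:
  assumes "\<bar>t\<bar> \<le> 2" "lin_rec t a"
  shows "\<bar>a k\<bar> \<le> \<bar>a 0\<bar> + real k * sqrt (QF t a)"
proof (induction k)
  case 0 then show ?case by simp
next
  case (Suc k)
  have "(\<bar>\<bar>a (Suc k)\<bar> - \<bar>a k\<bar>\<bar>)^2 \<le> QF t a"
    using QF_lower[OF assms(1), of "a (Suc k)" "a k"] QF_inv[OF assms(2), of k] by simp
  then have "\<bar>\<bar>a (Suc k)\<bar> - \<bar>a k\<bar>\<bar> \<le> sqrt (QF t a)" by (rule real_le_rsqrt)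
  then show ?case using Suc by (simp add: algebra_simps)
qed

lemma hyp_formula:
  assumes "\<rho> + \<mu> = t" "\<rho> * \<mu> = 1" "\<rho> \<noteq> \<mu>" "lin_rec t a"
  shows "a k = \<rho>^k * ((a 1 - \<mu> * a 0)/(\<rho> - \<mu>)) + \<mu>^k * ((\<rho> * a 0 - a 1)/(\<rho> - \<mu>))"
proof -
  define \<alpha> where "\<alpha> = (a 1 - \<mu> * a 0)/(\<rho> - \<mu>)"
  define \<beta> where "\<beta> = (\<rho> * a 0 - a 1)/(\<rho> - \<mu>)"
  define F where "F k = \<rho>^k * \<alpha> + \<mu>^k * \<beta>" for k
  have d: "\<rho> - \<mu> \<noteq> 0" using assms by simp
  have F0: "F 0 = a 0"
  proof -
    have "F 0 = ((a 1 - \<mu> * a 0) + (\<rho> * a 0 - a 1))/(\<rho> - \<mu>)" unfolding F_def \<alpha>_def \<beta>_def by (simp only: add_divide_distrib power_0 mult_1)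
    also have "\<dots> = a 0" using d by (simp add: field_simps)
    finally show ?thesis .
  qed
  have F1: "F 1 = a 1"
  proof -
    have "F 1 = (\<rho> * (a 1 - \<mu> * a 0) + \<mu> * (\<rho> * a 0 - a 1))/(\<rho> - \<mu>)" unfolding F_def \<alpha>_def \<beta>_def by (simp only: add_divide_distrib power_one_right times_divide_eq_right)
    also have "\<dots> = a 1" using d by (simp add: field_simps)
    finally show ?thesis .
  qed
  have tr: "t * \<rho> - 1 = \<rho> * \<rho>" "t * \<mu> - 1 = \<mu> * \<mu>" using assms(1,2) by (auto simp: algebra_simps)
  have FS: "F (Suc (Suc k)) = t * F (Suc k) - F k" for k
  proof -
    have "t * F (Suc k) - F k = \<rho>^k * (t * \<rho> - 1) * \<alpha> + \<mu>^k * (t * \<mu> - 1) * \<beta>"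
      by (simp add: F_def algebra_simps)
    then show ?thesis unfolding tr by (simp add: F_def algebra_simps)
  qed
  have "a k = F k \<and> a (Suc k) = F (Suc k)"
  proof (induction k)
    case 0 show ?case using F0 F1 by simp
  next
    case (Suc k)
    have "a (Suc (Suc k)) = t * a (Suc k) - a k" using assms(4) by (simp add: lin_rec_def)
    then show ?case using Suc FS by simp
  qed
  then show ?thesis by (simp add: F_def \<alpha>_def \<beta>_def)
qed

lemma L_a: assumes "\<bar>t\<bar> \<le> 2" "lin_rec t a" "QF t a > 16"
  shows "\<bar>a k\<bar> > 2 \<or> \<bar>a (Suc k)\<bar> > 2"
proof (rule ccontr)
  assume "\<not> ?thesis"
  then have "\<bar>a (Suc k)\<bar> + \<bar>a k\<bar> \<le> 4" by simp
  then have "(\<bar>a (Suc k)\<bar> + \<bar>a k\<bar>)^2 \<le> 4^2" by (intro power_mono) auto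
  moreover have "QF t a \<le> (\<bar>a (Suc k)\<bar> + \<bar>a k\<bar>)^2"
    using QF_upper[OF assms(1), of "a (Suc k)" "a k"] QF_inv[OF assms(2), of k] by simp
  ultimately show False using assms(3) by simp
qed

lemma L_b: assumes "t = 2 * s" "s^2 = 1" "lin_rec t a"
  shows "a k = s^k * (a 0 + real k * (s * a 1 - a 0))"
proof -
  define d where "d = s * a 1 - a 0"
  define F where "F k = s^k * (a 0 + real k * d)" for k
  have ss: "s * s = 1" using assms(2) by (simp add: power2_eq_square)
  have p2: "s^(Suc (Suc k)) = s^k" for k
  proof -
    have "s^(Suc (Suc k)) = (s * s) * s^k" by (simp add: mult.assoc)
    then show ?thesis using ss by simp
  qed
  have p1: "t * s^(Suc k) = 2 * s^k" for k
  proof -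
    have "t * s^(Suc k) = 2 * (s * s) * s^k" by (simp add: assms(1) mult.assoc)
    then show ?thesis using ss by simp
  qed
  have FS: "F (Suc (Suc k)) = t * F (Suc k) - F k" for k
  proof -
    have "t * F (Suc k) - F k = (t * s^(Suc k)) * (a 0 + real (Suc k) * d) - s^k * (a 0 + real k * d)"
      unfolding F_def by (simp only: mult.assoc)
    also have "\<dots> = s^k * (2*(a 0 + real (Suc k) * d) - (a 0 + real k * d))" unfolding p1 by (simp add: algebra_simps)
    also have "\<dots> = s^k * (a 0 + real (Suc (Suc k)) * d)" by (simp add: algebra_simps)
    also have "\<dots> = F (Suc (Suc k))" unfolding F_def p2 ..

    finally show ?thesis by simp
  qed
  have F1: "F 1 = a 1" by (simp add: F_def d_def algebra_simps ss mult.assoc[symmetric])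
  have "a k = F k \<and> a (Suc k) = F (Suc k)"
  proof (induction k)
    case 0 show ?case using F1 by (simp add: F_def)
  next
    case (Suc k)
    have "a (Suc (Suc k)) = t * a (Suc k) - a k" using assms(3) by (simp add: lin_rec_def)
    then show ?case using Suc FS by simp
  qed
  then show ?thesis by (simp add: F_def d_def)
qed

lemma QF_split: "QF t c = (c 1 - (t/2) * c 0)^2 + (1 - t^2/4) * (c 0)^2"
  by (simp add: QF_def power2_eq_square algebra_simps)

lemma QF_zero:
  assumes "\<bar>t\<bar> \<le> 2" "QF t c = 0" "c 0 \<noteq> 0"
  shows "t^2 = 4" "c 1 = (t/2) * c 0"
proof -
  have t4: "t^2 \<le> 4" using assms(1) by (metis abs_le_square_iff abs_numeral power2_eq_square real_sqrt_abs real_sqrt_four real_sqrt_le_iff) 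
  have p: "(1 - t^2/4) * (c 0)^2 \<ge> 0" using t4 by simp
  have q: "(c 1 - (t/2) * c 0)^2 \<ge> 0" by simp
  have "(1 - t^2/4) * (c 0)^2 = 0" using assms(2) QF_split[of t c] p q by linarith
  then show "t^2 = 4" using assms(3) by simp
  have "(c 1 - (t/2) * c 0)^2 = 0" using assms(2) QF_split[of t c] p q by linarith
  then show "c 1 = (t/2) * c 0" by simp
qed

lemma QF_expand:
  "QF t a = l^2 * QF t c + l * (2*c 1*(a 1 - l * c 1) - t*(c 1*(a 0 - l * c 0) + c 0*(a 1 - l * c 1)) + 2*c 0*(a 0 - l * c 0))
     + ((a 1 - l * c 1)^2 - t*(a 1 - l * c 1)*(a 0 - l * c 0) + (a 0 - l * c 0)^2)"
  by (simp add: QF_def power2_eq_square algebra_simps)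

lemma X_bound:
  fixes t c0 c1 r0 r1 C :: real
  assumes "\<bar>t\<bar> \<le> 2" "\<bar>r0\<bar> \<le> C" "\<bar>r1\<bar> \<le> C"
  shows "\<bar>2*c1*r1 - t*(c1*r0 + c0*r1) + 2*c0*r0\<bar> \<le> 4*C*(\<bar>c0\<bar> + \<bar>c1\<bar>)"
proof -
  have a1: "\<bar>2*c1*r1\<bar> \<le> 2*\<bar>c1\<bar>*C" using assms by (simp add: abs_mult mult_left_mono)
  have a2: "\<bar>t*c1*r0\<bar> \<le> 2*\<bar>c1\<bar>*C"
  proof -
    have "\<bar>t*c1*r0\<bar> \<le> 2*\<bar>c1\<bar>*\<bar>r0\<bar>" by (rule txy_bound[OF assms(1)])
    also have "\<dots> \<le> 2*\<bar>c1\<bar>*C" using assms by (simp add: mult_left_mono)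
    finally show ?thesis .
  qed
  have a3: "\<bar>t*c0*r1\<bar> \<le> 2*\<bar>c0\<bar>*C"
  proof -
    have "\<bar>t*c0*r1\<bar> \<le> 2*\<bar>c0\<bar>*\<bar>r1\<bar>" by (rule txy_bound[OF assms(1)])
    also have "\<dots> \<le> 2*\<bar>c0\<bar>*C" using assms by (simp add: mult_left_mono)
    finally show ?thesis .
  qed
  have a4: "\<bar>2*c0*r0\<bar> \<le> 2*\<bar>c0\<bar>*C" using assms by (simp add: abs_mult mult_left_mono)
  have e: "2*c1*r1 - t*(c1*r0 + c0*r1) + 2*c0*r0 = 2*c1*r1 - t*c1*r0 - t*c0*r1 + 2*c0*r0"
    by (simp add: algebra_simps)
  show ?thesis unfolding e using a1 a2 a3 a4 by (simp add: algebra_simps) linarith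
qed

lemma freq_big:
  assumes t: "\<bar>t\<bar> \<le> 2" and c: "lin_rec t c" "c 0 \<noteq> 0" and C: "C \<ge> 0"
  shows "\<exists>\<Lambda>>0. \<forall>l a. lin_rec t a \<longrightarrow> \<bar>l\<bar> \<ge> \<Lambda> \<longrightarrow> \<bar>a 0 - l * c 0\<bar> \<le> C \<longrightarrow> \<bar>a 1 - l * c 1\<bar> \<le> C
            \<longrightarrow> (\<forall>N. \<exists>k\<ge>N. \<bar>a k\<bar> > 2)"
proof (cases "QF t c > 0")
  case True
  define K where "K = 4*C*(\<bar>c 0\<bar> + \<bar>c 1\<bar>)"
  have K0: "K \<ge> 0" using C by (simp add: K_def)
  define \<Lambda> where "\<Lambda> = max 1 ((K + 17) / QF t c)"
  show ?thesis
  proof (intro exI[of _ \<Lambda>] conjI allI impI)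
    show "\<Lambda> > 0" by (simp add: \<Lambda>_def)
    fix l a N assume a: "lin_rec t a" and l: "\<bar>l\<bar> \<ge> \<Lambda>" and r0: "\<bar>a 0 - l * c 0\<bar> \<le> C" and r1: "\<bar>a 1 - l * c 1\<bar> \<le> C"
    define X where "X = 2*c 1*(a 1 - l * c 1) - t*(c 1*(a 0 - l * c 0) + c 0*(a 1 - l * c 1)) + 2*c 0*(a 0 - l * c 0)"
    have XK: "\<bar>X\<bar> \<le> K" unfolding X_def K_def by (rule X_bound[OF t r0 r1])
    define Qr where "Qr = (a 1 - l * c 1)^2 - t*(a 1 - l * c 1)*(a 0 - l * c 0) + (a 0 - l * c 0)^2"
    have Qr: "Qr \<ge> 0" unfolding Qr_def
      by (rule order_trans[OF zero_le_power2 QF_lower[OF t]])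
    have ex: "QF t a = l^2 * QF t c + l * X + Qr" unfolding X_def Qr_def by (rule QF_expand)
    have l1: "\<bar>l\<bar> \<ge> 1" and lK: "\<bar>l\<bar> \<ge> (K + 17) / QF t c" using l by (auto simp: \<Lambda>_def)
    have lK2: "\<bar>l\<bar> * QF t c - K \<ge> 17" using lK True by (simp add: field_simps)
    have lX: "l * X \<ge> - (\<bar>l\<bar> * K)"
    proof -
      have "\<bar>l * X\<bar> \<le> \<bar>l\<bar> * K" by (simp add: abs_mult XK mult_left_mono)
      then show ?thesis by linarith
    qed
    have e2: "\<bar>l\<bar> * (\<bar>l\<bar> * QF t c - K) = l^2 * QF t c - \<bar>l\<bar> * K"
      by (simp add: power2_eq_square algebra_simps)
    have "\<bar>l\<bar> * (\<bar>l\<bar> * QF t c - K) \<ge> 1 * 17"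
      using l1 lK2 by (intro mult_mono) auto
    then have "QF t a > 16" using ex lX Qr e2 by linarith
    then have "\<bar>a N\<bar> > 2 \<or> \<bar>a (Suc N)\<bar> > 2" by (rule L_a[OF t a])
    then show "\<exists>k\<ge>N. \<bar>a k\<bar> > 2" by (meson le_SucI order_refl)
  qed
next
  case False
  then have Q0: "QF t c = 0" using QF_nonneg[OF t, of c] by simp
  define s where "s = t/2"
  have t4: "t^2 = 4" and c1: "c 1 = s * c 0" using QF_zero[OF t Q0 c(2)] by (auto simp: s_def)
  have s2: "s^2 = 1" using t4 by (simp add: s_def power_divide)
  have ts: "t = 2 * s" by (simp add: s_def)
  have sabs: "\<bar>s\<bar> = 1" using s2 by (metis abs_power2 power2_eq_1_iff abs_1 abs_neg_one)
  define \<Lambda> where "\<Lambda> = (C + 3) / \<bar>c 0\<bar>"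
  show ?thesis
  proof (intro exI[of _ \<Lambda>] conjI allI impI)
    show "\<Lambda> > 0" using C c(2) by (simp add: \<Lambda>_def)
    fix l a N assume a: "lin_rec t a" and l: "\<bar>l\<bar> \<ge> \<Lambda>" and r0: "\<bar>a 0 - l * c 0\<bar> \<le> C" and r1: "\<bar>a 1 - l * c 1\<bar> \<le> C"
    define d where "d = s * a 1 - a 0"
    have ak: "a k = s^k * (a 0 + real k * d)" for k unfolding d_def by (rule L_b[OF ts s2 a])
    have akabs: "\<bar>a k\<bar> = \<bar>a 0 + real k * d\<bar>" for k using ak[of k] sabs by (simp add: abs_mult power_abs)
    show "\<exists>k\<ge>N. \<bar>a k\<bar> > 2"
    proof (cases "d = 0")
      case True
      have "\<bar>l\<bar> * \<bar>c 0\<bar> \<ge> C + 3" using l c(2) by (simp add: \<Lambda>_def field_simps)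
      then have "\<bar>a 0\<bar> \<ge> 3" using r0 by (simp add: abs_mult)
      then show ?thesis using akabs[of N] True by (intro exI[of _ N]) auto
    next
      case False
      define k where "k = N + nat \<lceil>(\<bar>a 0\<bar> + 3) / \<bar>d\<bar>\<rceil>"
      have "real k \<ge> (\<bar>a 0\<bar> + 3) / \<bar>d\<bar>" unfolding k_def by linarith
      then have "real k * \<bar>d\<bar> \<ge> \<bar>a 0\<bar> + 3" using False by (simp add: field_simps)
      then have "\<bar>real k * d\<bar> \<ge> \<bar>a 0\<bar> + 3" by (simp add: abs_mult)
      then have "\<bar>a k\<bar> > 2" unfolding akabs by linarith
      then show ?thesis by (intro exI[of _ k]) (simp add: k_def)
    qed
  qed
qed

lemma lnSuc_over: "(\<lambda>n. ln (real (Suc n)) / real (Suc n)) \<longlonglongrightarrow> 0"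
  using lim_ln_over_n filterlim_sequentially_Suc[of "\<lambda>n::nat. ln (real n) / real n"] by simp

lemma const_over: "(\<lambda>n. B / real (Suc n)) \<longlonglongrightarrow> 0"
  using tendsto_mult_right_zero[OF LIMSEQ_inverse_real_of_nat, of B] by (simp add: divide_inverse)

lemma neg_div_le: "\<bar>x\<bar> \<le> B \<Longrightarrow> - (B / real (Suc n)) \<le> x / real (Suc n)"
proof -
  assume "\<bar>x\<bar> \<le> B"
  then have "-B \<le> x" by linarith
  then have "(-B) / real (Suc n) \<le> x / real (Suc n)" by (rule divide_right_mono) simp
  then show ?thesis by simp
qed

lemma lim_ell:
  assumes t: "\<bar>t\<bar> \<le> 2" and a: "lin_rec t a" and S1: "\<And>n. S n \<ge> 1" and S2: "\<And>n. S n \<le> \<bar>a n\<bar> + 1"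
  shows "(\<lambda>n. ln (S n) / real (Suc n)) \<longlonglongrightarrow> 0"
proof -
  define K where "K = \<bar>a 0\<bar> + sqrt (QF t a) + 1"
  have K1: "K \<ge> 1" unfolding K_def using QF_nonneg[OF t, of a] by simp
  have up: "ln (S n) / real (Suc n) \<le> ln K / real (Suc n) + ln (real (Suc n)) / real (Suc n)" for n
  proof -
    have "\<bar>a n\<bar> \<le> \<bar>a 0\<bar> + real n * sqrt (QF t a)" by (rule poly_bound[OF t a])
    also have "\<dots> \<le> (\<bar>a 0\<bar> + sqrt (QF t a)) * real (Suc n)"
      using QF_nonneg[OF t, of a] by (simp add: algebra_simps)
    finally have "S n \<le> (\<bar>a 0\<bar> + sqrt (QF t a)) * real (Suc n) + 1" using S2[of n] by linarith
    also have "\<dots> \<le> K * real (Suc n)" unfolding K_def by (simp add: algebra_simps)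
    finally have "ln (S n) \<le> ln (K * real (Suc n))" using S1[of n] by simp
    also have "\<dots> = ln K + ln (real (Suc n))" using K1 by (simp add: ln_mult)
    finally show ?thesis by (simp add: add_divide_distrib[symmetric] divide_right_mono)
  qed
  have lo: "0 \<le> ln (S n) / real (Suc n)" for n using S1[of n] by simp
  have U: "(\<lambda>n. ln K / real (Suc n) + ln (real (Suc n)) / real (Suc n)) \<longlonglongrightarrow> 0"
    using tendsto_add[OF const_over lnSuc_over] by simp
  show ?thesis
    by (rule tendsto_sandwich[of "\<lambda>n. 0" _ _ "\<lambda>n. ln K / real (Suc n) + ln (real (Suc n)) / real (Suc n)", OF _ _ _ U])
       (auto intro!: always_eventually simp only: lo up)
qed

lemma lim_hyp:
  assumes rm: "\<rho> + \<mu> = t" "\<rho> * \<mu> = 1" and r1: "\<bar>\<rho>\<bar> > 1" and a: "lin_rec t a" and f: "a 1 - \<mu> * a 0 \<noteq> 0"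
    and S0: "\<And>n. \<bar>a n\<bar> \<le> 2 * S n" and S1: "\<And>n. S n \<ge> 1" and S2: "\<And>n. S n \<le> \<bar>a n\<bar> + 1"
  shows "(\<lambda>n. ln (S n) / real (Suc n)) \<longlonglongrightarrow> ln \<bar>\<rho>\<bar>"
proof -
  have \<rho>0: "\<rho> \<noteq> 0" using r1 by auto
  have \<mu>: "\<mu> = 1/\<rho>" using rm(2) \<rho>0 by (simp add: field_simps)
  have m1: "\<bar>\<mu>\<bar> < 1" using r1 \<mu> by (simp add: abs_divide)
  have ne: "\<rho> \<noteq> \<mu>" using r1 m1 by auto
  define \<alpha> where "\<alpha> = (a 1 - \<mu> * a 0)/(\<rho> - \<mu>)"
  define \<beta> where "\<beta> = (\<rho> * a 0 - a 1)/(\<rho> - \<mu>)"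
  have \<alpha>0: "\<alpha> \<noteq> 0" using f ne by (simp add: \<alpha>_def)
  define q where "q = \<mu> * \<mu>"
  have q1: "\<bar>q\<bar> < 1" using m1 unfolding q_def abs_mult by (metis abs_ge_zero mult_strict_mono' mult_1 less_le_not_le linorder_not_le order_le_less_trans)
  define g where "g n = \<alpha> + q^n * \<beta>" for n
  have an: "a n = \<rho>^n * g n" for n
  proof -
    have "\<mu>^n = \<rho>^n * q^n" unfolding q_def \<mu> by (simp add: power_mult_distrib power_divide field_simps \<rho>0)
    then show ?thesis using hyp_formula[OF rm ne a, of n] by (simp add: g_def \<alpha>_def \<beta>_def algebra_simps)
  qed
  have gl: "g \<longlonglongrightarrow> \<alpha>"
  proof -
    have "(\<lambda>n. q^n * \<beta>) \<longlonglongrightarrow> 0 * \<beta>" by (intro tendsto_mult LIMSEQ_power_zero tendsto_const) (use q1 in auto)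
    then have "(\<lambda>n. \<alpha> + q^n * \<beta>) \<longlonglongrightarrow> \<alpha> + 0 * \<beta>" by (intro tendsto_add tendsto_const)
    moreover have "g = (\<lambda>n. \<alpha> + q^n * \<beta>)" by (rule ext) (simp add: g_def)
    ultimately show ?thesis by simp
  qed
  have ev1: "eventually (\<lambda>n. \<bar>g n\<bar> > \<bar>\<alpha>\<bar>/2) sequentially"
  proof -
    have "((\<lambda>n. \<bar>g n\<bar>) \<longlongrightarrow> \<bar>\<alpha>\<bar>) sequentially" by (intro tendsto_rabs gl)
    moreover have "\<bar>\<alpha>\<bar>/2 < \<bar>\<alpha>\<bar>" using \<alpha>0 by simp
    ultimately show ?thesis by (rule order_tendstoD(1))
  qed
  have gb: "\<bar>g n\<bar> \<le> \<bar>\<alpha>\<bar> + \<bar>\<beta>\<bar>" for n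
  proof -
    have "\<bar>q^n\<bar> \<le> 1" using q1 by (simp add: power_abs power_le_one)
    then have "\<bar>q^n * \<beta>\<bar> \<le> \<bar>\<beta>\<bar>" by (simp add: abs_mult mult_left_le_one_le)
    then show ?thesis unfolding g_def by linarith
  qed
  define B where "B = max \<bar>ln (\<bar>\<alpha>\<bar>/4)\<bar> \<bar>ln (\<bar>\<alpha>\<bar> + \<bar>\<beta>\<bar> + 1)\<bar>"
  have lr: "ln (\<bar>\<rho>\<bar>^n) = real n * ln \<bar>\<rho>\<bar>" for n using r1 by (simp add: ln_realpow)
  have evB: "eventually (\<lambda>n. \<bar>ln (S n) - real n * ln \<bar>\<rho>\<bar>\<bar> \<le> B) sequentially"
    using ev1
  proof (rule eventually_mono)
    fix n assume gn: "\<bar>g n\<bar> > \<bar>\<alpha>\<bar>/2"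
    have rp: "\<bar>\<rho>\<bar>^n \<ge> 1" using r1 by simp
    have "S n \<ge> \<bar>a n\<bar>/2" using S0[of n] by simp
    also have "\<bar>a n\<bar>/2 = \<bar>\<rho>\<bar>^n * (\<bar>g n\<bar>/2)" by (simp add: an abs_mult power_abs)
    also have "\<dots> \<ge> \<bar>\<rho>\<bar>^n * (\<bar>\<alpha>\<bar>/4)" using gn by (intro mult_left_mono) auto
    finally have lo: "S n \<ge> \<bar>\<rho>\<bar>^n * (\<bar>\<alpha>\<bar>/4)" .
    have pos: "\<bar>\<rho>\<bar>^n * (\<bar>\<alpha>\<bar>/4) > 0" using \<alpha>0 r1 by simp
    have "ln (S n) \<ge> ln (\<bar>\<rho>\<bar>^n * (\<bar>\<alpha>\<bar>/4))" using lo pos by simp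
    also have "ln (\<bar>\<rho>\<bar>^n * (\<bar>\<alpha>\<bar>/4)) = real n * ln \<bar>\<rho>\<bar> + ln (\<bar>\<alpha>\<bar>/4)"
      using \<alpha>0 r1 by (subst ln_mult) (simp_all add: lr)
    finally have L: "ln (S n) - real n * ln \<bar>\<rho>\<bar> \<ge> ln (\<bar>\<alpha>\<bar>/4)" by simp
    have "S n \<le> \<bar>\<rho>\<bar>^n * \<bar>g n\<bar> + 1" using S2[of n] by (simp add: an abs_mult power_abs)
    also have "\<dots> \<le> \<bar>\<rho>\<bar>^n * (\<bar>\<alpha>\<bar> + \<bar>\<beta>\<bar>) + \<bar>\<rho>\<bar>^n"
    proof -
      have "\<bar>\<rho>\<bar>^n * \<bar>g n\<bar> \<le> \<bar>\<rho>\<bar>^n * (\<bar>\<alpha>\<bar> + \<bar>\<beta>\<bar>)" by (rule mult_left_mono[OF gb]) simp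
      then show ?thesis using rp by linarith
    qed
    also have "\<dots> = \<bar>\<rho>\<bar>^n * (\<bar>\<alpha>\<bar> + \<bar>\<beta>\<bar> + 1)" by (simp add: algebra_simps)
    finally have "ln (S n) \<le> ln (\<bar>\<rho>\<bar>^n * (\<bar>\<alpha>\<bar> + \<bar>\<beta>\<bar> + 1))" using S1[of n] by simp
    also have "\<dots> = real n * ln \<bar>\<rho>\<bar> + ln (\<bar>\<alpha>\<bar> + \<bar>\<beta>\<bar> + 1)"
    proof -
      have "\<bar>\<alpha>\<bar> + \<bar>\<beta>\<bar> + 1 > 0" by (smt (verit) abs_ge_zero)
      then show ?thesis using r1 by (subst ln_mult) (simp_all add: lr)
    qed
    finally have U: "ln (S n) - real n * ln \<bar>\<rho>\<bar> \<le> ln (\<bar>\<alpha>\<bar> + \<bar>\<beta>\<bar> + 1)" by simp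
    show "\<bar>ln (S n) - real n * ln \<bar>\<rho>\<bar>\<bar> \<le> B" using L U unfolding B_def by linarith
  qed
  define e where "e n = ln (S n) - real n * ln \<bar>\<rho>\<bar>" for n
  have E: "(\<lambda>n. e n / real (Suc n)) \<longlonglongrightarrow> 0"
  proof (rule tendsto_sandwich[of "\<lambda>n. - (B / real (Suc n))" _ _ "\<lambda>n. B / real (Suc n)"])
    show "eventually (\<lambda>n. - (B / real (Suc n)) \<le> e n / real (Suc n)) sequentially"
      using evB by (rule eventually_mono) (unfold e_def, rule neg_div_le)
    show "eventually (\<lambda>n. e n / real (Suc n) \<le> B / real (Suc n)) sequentially"
      using evB by (rule eventually_mono) (simp add: e_def divide_right_mono abs_le_iff)
    show "(\<lambda>n. - (B / real (Suc n))) \<longlonglongrightarrow> 0" using tendsto_minus[OF const_over[of B]] by simp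
    show "(\<lambda>n. B / real (Suc n)) \<longlonglongrightarrow> 0" by (rule const_over)
  qed
  have "(\<lambda>n. e n / real (Suc n) + ln \<bar>\<rho>\<bar> * (real n / real (Suc n))) \<longlonglongrightarrow> 0 + ln \<bar>\<rho>\<bar> * 1"
    by (intro tendsto_add E tendsto_mult tendsto_const LIMSEQ_n_over_Suc_n)
  moreover have "e n / real (Suc n) + ln \<bar>\<rho>\<bar> * (real n / real (Suc n)) = ln (S n) / real (Suc n)" for n
  proof -
    have "e n / real (Suc n) + ln \<bar>\<rho>\<bar> * (real n / real (Suc n)) = (e n + ln \<bar>\<rho>\<bar> * real n) / real (Suc n)"
      by (simp add: add_divide_distrib)
    also have "\<dots> = ln (S n) / real (Suc n)" by (simp add: e_def)
    finally show ?thesis .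
  qed
  ultimately show ?thesis by simp
qed

definition den :: "((int \<Rightarrow> nat) \<Rightarrow> real) \<Rightarrow> nat list \<Rightarrow> real" where
  "den r w = (\<Sum>k<length w. r ((shift ^^ k) (per w)))"

lemma lyap_den: "lyap r M w = ln (sr (cpow M (per w) (length w))) / den r w"
  by (simp add: lyap_def den_def)

lemma per_in: assumes "w \<noteq> []" "set w \<subseteq> {1,2,3}" shows "per w \<in> Sigma3"
proof -
  have "per w j \<in> {1,2,3}" for j
  proof -
    have "nat (j mod int (length w)) < length w" using assms(1)
      by (metis length_greater_0_conv nat_less_iff of_nat_0_less_iff pos_mod_bound pos_mod_sign)
    then have "w ! nat (j mod int (length w)) \<in> set w" by simp
    then show ?thesis using assms(2) by (auto simp: per_def)
  qed
  then show ?thesis by (simp add: Sigma3_def)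
qed

lemma shift_in: "x \<in> Sigma3 \<Longrightarrow> (shift ^^ k) x \<in> Sigma3"
  by (simp add: shift_pow Sigma3_def)

lemma cont_local:
  fixes r :: "(int \<Rightarrow> nat) \<Rightarrow> real"
  assumes c: "continuous_on Sigma3 r" and x: "x \<in> Sigma3" and d: "\<delta> > 0"
  shows "\<exists>q::nat. \<forall>y\<in>Sigma3. (\<forall>j. \<bar>j\<bar> \<le> int q \<longrightarrow> y j = x j) \<longrightarrow> \<bar>r y - r x\<bar> < \<delta>"
proof -
  have "open (ball (r x) \<delta>)" "r x \<in> ball (r x) \<delta>" using d by auto
  then obtain A where A: "open A" "x \<in> A" "\<forall>y\<in>Sigma3. y \<in> A \<longrightarrow> r y \<in> ball (r x) \<delta>"
    using c x unfolding continuous_on_topological by metis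
  have "openin (product_topology (\<lambda>i. euclidean) UNIV) A" using A(1) by (simp add: open_fun_def)
  from product_topology_open_contains_basis[OF this A(2)] obtain X where
    X: "x \<in> (\<Pi>\<^sub>E i\<in>UNIV. X i)" "\<And>i. openin euclidean (X i)" "finite {i. X i \<noteq> topspace euclidean}"
       "(\<Pi>\<^sub>E i\<in>UNIV. X i) \<subseteq> A"
    by auto
  define F where "F = {i. X i \<noteq> UNIV}"
  have F: "finite F" using X(3) by (simp add: F_def)
  define q where "q = Max (insert 0 ((\<lambda>i. nat \<bar>i\<bar>) ` F))"
  have qF: "\<bar>i\<bar> \<le> int q" if "i \<in> F" for i
  proof -
    have "nat \<bar>i\<bar> \<le> q" unfolding q_def using F that by (intro Max_ge) auto
    then show ?thesis by linarith
  qed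
  show ?thesis
  proof (intro exI[of _ q] ballI impI)
    fix y assume y: "y \<in> Sigma3" and ag: "\<forall>j. \<bar>j\<bar> \<le> int q \<longrightarrow> y j = x j"
    have "y \<in> (\<Pi>\<^sub>E i\<in>UNIV. X i)"
    proof -
      have "y i \<in> X i" for i
      proof (cases "i \<in> F")
        case True then have "y i = x i" using ag qF by auto
        then show ?thesis using X(1) by auto
      next
        case False then show ?thesis by (simp add: F_def)
      qed
      then show ?thesis by auto
    qed
    then have "r y \<in> ball (r x) \<delta>" using A(3) X(4) y by auto
    then show "\<bar>r y - r x\<bar> < \<delta>" by (simp add: dist_real_def abs_minus_commute)
  qed
qed

lemma Sigma3_compact: "compact Sigma3"
proof -
  have S: "Sigma3 = PiE UNIV (\<lambda>_. {1,2,3::nat})" by (auto simp: Sigma3_def PiE_def extensional_def)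
  have "compactin (product_topology (\<lambda>_. euclidean) UNIV) (PiE UNIV (\<lambda>_. {1,2,3::nat}))"
    by (subst compactin_PiE) (simp add: finite_imp_compact)
  then show ?thesis unfolding S euclidean_product_topology by simp
qed

lemma r_bound: fixes r :: "(int \<Rightarrow> nat) \<Rightarrow> real" assumes "continuous_on Sigma3 r" shows "\<exists>R. \<forall>x\<in>Sigma3. \<bar>r x\<bar> \<le> (R::real)"
proof -
  have "compact (r ` Sigma3)" by (rule compact_continuous_image[OF assms Sigma3_compact])
  then have "bounded (r ` Sigma3)" by (rule compact_imp_bounded)
  then show ?thesis by (auto simp: bounded_real)
qed

lemma per_single: "per [i] = (\<lambda>_. i)"
  by (simp add: per_def fun_eq_iff)

lemma lyap_single: "lyap r M [i] = ln (sr (M i i)) / r (\<lambda>_. i)"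
  by (simp add: lyap_def per_single)

lemma den_pos: assumes "\<forall>x\<in>Sigma3. r x > 0" "w \<noteq> []" "set w \<subseteq> {1,2,3}" shows "den r w > 0"
proof -
  have "\<forall>k<length w. r ((shift ^^ k) (per w)) > 0" using assms shift_in per_in by blast
  then show ?thesis unfolding den_def using assms(2) by (intro sum_pos) auto
qed

lemma bad_card:
  assumes "q \<le> n"
  shows "card {k. k < Suc n + L \<and> (k < q \<or> n < k + q)} \<le> 2*q + L"
proof -
  have "{k. k < Suc n + L \<and> (k < q \<or> n < k + q)} \<subseteq> {..<q} \<union> {Suc n - q..<Suc n + L}" by auto
  then have "card {k. k < Suc n + L \<and> (k < q \<or> n < k + q)} \<le> card ({..<q} \<union> {Suc n - q..<Suc n + L})"
    by (intro card_mono) auto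
  also have "\<dots> \<le> card {..<q} + card {Suc n - q..<Suc n + L}" by (rule card_Un_le)
  also have "\<dots> = 2*q + L" using assms by simp
  finally show ?thesis .
qed

lemma den_lim:
  fixes r :: "(int \<Rightarrow> nat) \<Rightarrow> real"
  assumes c: "continuous_on Sigma3 r" and u: "set u \<subseteq> {1,2,3}" and i: "i \<in> {1,2,3}"
  shows "(\<lambda>n. den r (replicate (Suc n) i @ u) / real (Suc n)) \<longlonglongrightarrow> r (\<lambda>_. i)"
proof -
  define rb where "rb = r (\<lambda>_. i)"
  define L where "L = length u"
  have xi: "(\<lambda>_. i) \<in> Sigma3" using i by (simp add: Sigma3_def)
  obtain R where R: "\<forall>x\<in>Sigma3. \<bar>r x\<bar> \<le> R" using r_bound[OF c] by blast
  have R0: "R \<ge> 0" using R xi by (meson abs_ge_zero order_trans)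
  show ?thesis unfolding lim_sequentially dist_real_def
  proof (intro allI impI)
    fix \<epsilon> :: real assume e: "\<epsilon> > 0"
    define \<delta> where "\<delta> = \<epsilon> / (4 * (real L + 1))"
    have d0: "\<delta> > 0" using e by (simp add: \<delta>_def)
    obtain q where q: "\<forall>y\<in>Sigma3. (\<forall>j. \<bar>j\<bar> \<le> int q \<longrightarrow> y j = i) \<longrightarrow> \<bar>r y - rb\<bar> < \<delta>"
      using cont_local[OF c xi d0] by (auto simp: rb_def)
    define C0 where "C0 = 2 * R * (2 * q + L) + L * \<bar>rb\<bar>"
    have C00: "C0 \<ge> 0" using R0 by (simp add: C0_def)
    obtain N0 :: nat where N0: "real N0 > 2 * C0 / \<epsilon>" using reals_Archimedean2 by blast
    show "\<exists>no. \<forall>n\<ge>no. \<bar>den r (replicate (Suc n) i @ u) / real (Suc n) - r (\<lambda>_. i)\<bar> < \<epsilon>"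
    proof (intro exI[of _ "N0 + q"] allI impI)
      fix n assume n: "N0 + q \<le> n"
      define w where "w = replicate (Suc n) i @ u"
      define T where "T k = r ((shift ^^ k) (per w))" for k
      have lw: "length w = Suc n + L" by (simp add: w_def L_def)
      have wne: "w \<noteq> []" and ws: "set w \<subseteq> {1,2,3}" using u i by (auto simp: w_def)
      have Tin: "(shift ^^ k) (per w) \<in> Sigma3" for k by (rule shift_in[OF per_in[OF wne ws]])
      have good: "\<bar>T k - rb\<bar> < \<delta>" if "q \<le> k" "k + q \<le> n" for k
      proof -
        have "(shift ^^ k) (per w) j = i" if "\<bar>j\<bar> \<le> int q" for j
        proof -
          have j0: "0 \<le> j + int k" and j1: "j + int k < int (Suc n)" using that \<open>q \<le> k\<close> \<open>k + q \<le> n\<close> by auto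
          have "(shift ^^ k) (per w) j = w ! nat ((j + int k) mod int (length w))" by (simp add: shift_pow per_def)
          also have "(j + int k) mod int (length w) = j + int k" using j0 j1 lw by (intro mod_pos_pos_trivial) auto
          also have "w ! nat (j + int k) = i"
          proof -
            have jn: "nat (j + int k) < Suc n" using j0 j1 by linarith
            then show ?thesis by (simp add: w_def nth_append del: replicate_Suc)
          qed
          finally show ?thesis .
        qed
        then show ?thesis using q Tin unfolding T_def by blast
      qed
      have bad: "\<bar>T k - rb\<bar> \<le> 2 * R" for k
      proof -
        have "\<bar>T k\<bar> \<le> R" "\<bar>rb\<bar> \<le> R" using R Tin xi by (auto simp: T_def rb_def)
        then show ?thesis by linarith
      qed
      define Bad where "Bad = {k. k < Suc n + L \<and> (k < q \<or> n < k + q)}"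
      have "\<bar>den r w - real (Suc n + L) * rb\<bar> = \<bar>\<Sum>k<Suc n + L. (T k - rb)\<bar>"
        by (simp add: den_def T_def lw sum_subtractf)
      also have "\<dots> \<le> (\<Sum>k<Suc n + L. \<bar>T k - rb\<bar>)" by (rule sum_abs)
      also have "\<dots> \<le> (\<Sum>k<Suc n + L. \<delta> + (if k \<in> Bad then 2 * R else 0))"
      proof (rule sum_mono)
        fix k assume "k \<in> {..<Suc n + L}"
        then show "\<bar>T k - rb\<bar> \<le> \<delta> + (if k \<in> Bad then 2 * R else 0)"
          using good[of k] bad[of k] d0 by (auto simp: Bad_def)
      qed
      also have "\<dots> = real (Suc n + L) * \<delta> + 2 * R * real (card Bad)"
      proof -
        have "Bad \<subseteq> {..<Suc n + L}" by (auto simp: Bad_def)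
        then have "{..<Suc n + L} \<inter> Bad = Bad" by blast
        have "(\<Sum>k<Suc n + L. (if k \<in> Bad then 2 * R else 0)) = (\<Sum>k\<in>{..<Suc n + L} \<inter> Bad. 2 * R)"
          by (rule sum.inter_restrict[symmetric]) simp
        also have "\<dots> = 2 * R * real (card Bad)" using \<open>{..<Suc n + L} \<inter> Bad = Bad\<close> by simp
        finally have "(\<Sum>k<Suc n + L. (if k \<in> Bad then 2 * R else 0)) = 2 * R * real (card Bad)" .
        then show ?thesis by (simp add: sum.distrib)
      qed
      also have "\<dots> \<le> real (Suc n + L) * \<delta> + 2 * R * (2 * q + L)"
      proof -
        have "card Bad \<le> 2*q + L" unfolding Bad_def by (rule bad_card) (use n in simp)
        then have "real (card Bad) \<le> 2 * q + L" by linarith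
        then show ?thesis using R0 by (simp add: mult_left_mono)
      qed
      finally have D1: "\<bar>den r w - real (Suc n + L) * rb\<bar> \<le> real (Suc n + L) * \<delta> + 2 * R * (2 * q + L)" .
      have "\<bar>den r w - real (Suc n) * rb\<bar> \<le> \<bar>den r w - real (Suc n + L) * rb\<bar> + L * \<bar>rb\<bar>"
      proof -
        have "den r w - real (Suc n) * rb = (den r w - real (Suc n + L) * rb) + real L * rb" by (simp add: algebra_simps)
        then have "\<bar>den r w - real (Suc n) * rb\<bar> \<le> \<bar>den r w - real (Suc n + L) * rb\<bar> + \<bar>real L * rb\<bar>"
          by (metis abs_triangle_ineq)
        then show ?thesis by (simp add: abs_mult)
      qed
      also have "\<dots> \<le> real (Suc n + L) * \<delta> + C0" using D1 by (simp add: C0_def)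
      finally have D2: "\<bar>den r w - real (Suc n) * rb\<bar> \<le> real (Suc n + L) * \<delta> + C0" .
      have sn: "real (Suc n) > 0" by simp
      have "\<bar>den r w / real (Suc n) - rb\<bar> = \<bar>den r w - real (Suc n) * rb\<bar> / real (Suc n)"
        using sn by (simp add: field_simps abs_divide) 
      also have "\<dots> \<le> (real (Suc n + L) * \<delta> + C0) / real (Suc n)" using D2 sn by (simp add: divide_right_mono)
      also have "\<dots> = (real (Suc n + L) / real (Suc n)) * \<delta> + C0 / real (Suc n)" by (simp only: add_divide_distrib times_divide_eq_left)
      also have "\<dots> < \<epsilon>"
      proof -
        have "real (Suc n + L) / real (Suc n) \<le> real L + 1"
          using sn by (simp add: field_simps)
        then have a: "(real (Suc n + L) / real (Suc n)) * \<delta> \<le> (real L + 1) * \<delta>" using d0 by (intro mult_right_mono) auto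
        have b: "(real L + 1) * \<delta> = \<epsilon> / 4"
        proof -
          have "real L + 1 > 0" by simp
          then show ?thesis unfolding \<delta>_def by (simp add: field_simps)
        qed
        have "real (Suc n) > 2 * C0 / \<epsilon>" using N0 n by simp
        then have "C0 / real (Suc n) < \<epsilon> / 2 \<or> C0 = 0" using e C00 sn by (auto simp: field_simps)
        then have "C0 / real (Suc n) < \<epsilon> / 2" using e by auto
        then show ?thesis using a b e by linarith
      qed
      finally show "\<bar>den r (replicate (Suc n) i @ u) / real (Suc n) - r (\<lambda>_. i)\<bar> < \<epsilon>"
        by (simp add: w_def rb_def)
    qed
  qed
qed

lemma tr_rec: assumes "det X = 1" shows "lin_rec (tr X) (\<lambda>k. tr (G ** mpow X k))"
  unfolding lin_rec_def using mpow_rec[OF assms]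
  by (simp add: mm_rdiff mm_rscale tr_diff tr_scale)

lemma hyp_eigs:
  assumes "det A = 1" "\<bar>tr A\<bar> > 2"
  shows "\<exists>\<rho> \<mu>. \<rho> + \<mu> = tr A \<and> \<rho> * \<mu> = 1 \<and> \<bar>\<rho>\<bar> > 1 \<and> sr A = \<bar>\<rho>\<bar>"
proof -
  define t where "t = tr A"
  define s where "s = sqrt (t^2 - 4)"
  have "(2::real)^2 < \<bar>t\<bar>^2" by (rule power_strict_mono) (use assms(2) in \<open>auto simp: t_def\<close>)
  then have t2: "t^2 > 4" by simp
  have s2: "s^2 = t^2 - 4" and s0: "s \<ge> 0" using t2 by (simp_all add: s_def)
  have st: "sgn t * \<bar>t\<bar> = t" "sgn t * sgn t = 1" using assms(2) by (auto simp: t_def sgn_if)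
  define \<rho> where "\<rho> = sgn t * ((\<bar>t\<bar> + s)/2)"
  define \<mu> where "\<mu> = sgn t * ((\<bar>t\<bar> - s)/2)"
  have "\<rho> + \<mu> = t" unfolding \<rho>_def \<mu>_def using st by (simp add: algebra_simps add_divide_distrib[symmetric])
  moreover have "\<rho> * \<mu> = 1"
  proof -
    have e1: "\<rho> * \<mu> = (sgn t * sgn t) * (((\<bar>t\<bar> + s)/2) * ((\<bar>t\<bar> - s)/2))" unfolding \<rho>_def \<mu>_def
      by (simp only: mult_ac)
    have e2: "((\<bar>t\<bar> + s)/2) * ((\<bar>t\<bar> - s)/2) = (t^2 - s^2)/4"
      by (simp add: power2_eq_square field_simps abs_mult_self_eq)
    show ?thesis using e1 e2 st s2 by simp
  qed
  moreover have "\<bar>\<rho>\<bar> = (\<bar>t\<bar> + s)/2" using st s0 unfolding \<rho>_def by (auto simp: abs_mult sgn_if)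
  moreover have "(\<bar>t\<bar> + s)/2 > 1" using assms(2) s0 by (simp add: t_def)
  moreover have "sr A = (\<bar>t\<bar> + s)/2" using sr_hyp[OF assms] by (simp add: t_def s_def)
  ultimately have "\<rho> + \<mu> = tr A \<and> \<rho> * \<mu> = 1 \<and> \<bar>\<rho>\<bar> > 1 \<and> sr A = \<bar>\<rho>\<bar>" by (simp add: t_def)
  then show ?thesis by blast
qed

lemma mat_eq_entries: "(X::real^2^2) = Y \<Longrightarrow> True" by simp

lemma Pu_eig:
  assumes d: "det A = 1" and rm: "\<rho> + \<mu> = tr A" "\<rho> * \<mu> = 1"
  shows "(A - \<mu> *\<^sub>R mat 1) ** A = \<rho> *\<^sub>R (A - \<mu> *\<^sub>R mat 1)"
    "(\<rho> *\<^sub>R mat 1 - A) ** A = \<mu> *\<^sub>R (\<rho> *\<^sub>R mat 1 - A)"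
    "det (A - \<mu> *\<^sub>R mat 1) = 0"
  using assms unfolding mat2_eq
  by (simp_all add: mm_ent mat1_ent det_2 tr_def algebra_simps; algebra)+

lemma mpow_decomp:
  assumes d: "det A = 1" and rm: "\<rho> + \<mu> = tr A" "\<rho> * \<mu> = 1" and ne: "\<rho> \<noteq> \<mu>"
  defines "Pu \<equiv> (1/(\<rho>-\<mu>)) *\<^sub>R (A - \<mu> *\<^sub>R mat 1)" and "Ps \<equiv> (1/(\<rho>-\<mu>)) *\<^sub>R (\<rho> *\<^sub>R mat 1 - A)"
  shows "mpow A k = \<rho>^k *\<^sub>R Pu + \<mu>^k *\<^sub>R Ps"
proof (induction k)
  case 0
  have "Pu + Ps = (1/(\<rho>-\<mu>)) *\<^sub>R ((\<rho> - \<mu>) *\<^sub>R mat 1)"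
    unfolding Pu_def Ps_def by (simp add: algebra_simps scaleR_diff_left)
  also have "\<dots> = mat 1" using ne by simp
  finally show ?case by simp
next
  case (Suc k)
  have "Pu ** A = \<rho> *\<^sub>R Pu" unfolding Pu_def using Pu_eig(1)[OF d rm] by (simp add: mm_lscale)
  moreover have "Ps ** A = \<mu> *\<^sub>R Ps" unfolding Ps_def using Pu_eig(2)[OF d rm] by (simp add: mm_lscale)
  ultimately show ?case using Suc by (simp add: mm_ladd mm_lscale mult.commute)
qed

lemma det_scale2: "det (c *\<^sub>R (X::real^2^2)) = c^2 * det X"
  by (simp add: det_2 power2_eq_square algebra_simps)

lemma Pu_props:
  assumes d: "det A = 1" and rm: "\<rho> + \<mu> = tr A" "\<rho> * \<mu> = 1" and ne: "\<rho> \<noteq> \<mu>"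
  defines "Pu \<equiv> (1/(\<rho>-\<mu>)) *\<^sub>R (A - \<mu> *\<^sub>R mat 1)"
  shows "det Pu = 0" "tr Pu = 1"
proof -
  have "det (A - \<mu> *\<^sub>R mat 1) = 0" by (rule Pu_eig(3)[OF d rm])
  then show "det Pu = 0" unfolding Pu_def by (simp add: det_scale2)
  have "tr (A - \<mu> *\<^sub>R mat 1) = \<rho> - \<mu>" using rm by (simp add: tr_diff tr_scale tr_mat1)
  then show "tr Pu = 1" unfolding Pu_def using ne by (simp add: tr_scale)
qed

lemma rank1_sq: "det R = 0 \<Longrightarrow> R ** R = tr R *\<^sub>R R"
  using CH[of R] by simp

lemma tr_cyc3: "tr (X ** Y ** Z) = tr (Y ** Z ** X)"
  by (metis matrix_mul_assoc tr_comm)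

lemma det_exc:
  assumes dN: "\<forall>i\<in>{1,2,3}. \<forall>j\<in>{1,2,3}. det (N i j) = 1" and u: "set u \<subseteq> {1,2,3}" and i: "i \<in> {1,2,3}"
  shows "det (exc N i u) = 1"
  unfolding exc_def by (rule det_lp) (use dN u i in auto)

lemma conv_family:
  fixes r :: "(int \<Rightarrow> nat) \<Rightarrow> real" and N :: "nat \<Rightarrow> nat \<Rightarrow> real^2^2"
  assumes c: "continuous_on Sigma3 r" and pos: "\<forall>x\<in>Sigma3. r x > 0"
    and dN: "\<forall>i\<in>{1,2,3}. \<forall>j\<in>{1,2,3}. det (N i j) = 1"
    and u: "set u \<subseteq> {1,2,3}" and i: "i \<in> {1,2,3}"
    and cond: "\<bar>tr (N i i)\<bar> \<le> 2 \<or> (\<exists>\<rho> \<mu>. \<rho> + \<mu> = tr (N i i) \<and> \<rho> * \<mu> = 1 \<and> \<bar>\<rho>\<bar> > 1 \<and> sr (N i i) = \<bar>\<rho>\<bar>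
                 \<and> tr (exc N i u ** N i i) - \<mu> * tr (exc N i u) \<noteq> 0)"
  shows "(\<lambda>n. lyap r N (replicate (Suc n) i @ u)) \<longlonglongrightarrow> lyap r N [i]"
proof -
  define B where "B = N i i"
  define G where "G = exc N i u"
  define a where "a k = tr (G ** mpow B k)" for k
  define S where "S n = sr (G ** mpow B n)" for n
  define rb where "rb = r (\<lambda>_. i)"
  have dB: "det B = 1" using dN i unfolding B_def by blast
  have dG: "det G = 1" unfolding G_def by (rule det_exc[OF dN u i])
  have a: "lin_rec (tr B) a" unfolding a_def by (rule tr_rec[OF dB])
  have a0: "a 0 = tr G" and a1: "a 1 = tr (G ** B)" by (simp_all add: a_def)
  have dX: "det (G ** mpow B n) = 1" for n by (simp add: det_mul dG det_mpow dB)
  have Sb: "S n \<ge> 1" "\<bar>a n\<bar> \<le> 2 * S n" "S n \<le> \<bar>a n\<bar> + 1" for n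
    using sr_bounds[OF dX[of n]] by (simp_all add: S_def a_def)
  have rb0: "rb > 0" using pos i by (simp add: rb_def Sigma3_def)
  have lyw: "lyap r N (replicate (Suc n) i @ u) = ln (S n) / den r (replicate (Suc n) i @ u)" for n
    unfolding lyap_den cpow_word S_def G_def B_def ..
  have D: "(\<lambda>n. den r (replicate (Suc n) i @ u) / real (Suc n)) \<longlonglongrightarrow> rb"
    unfolding rb_def by (rule den_lim[OF c u i])
  have eq: "lyap r N (replicate (Suc n) i @ u) = (ln (S n) / real (Suc n)) / (den r (replicate (Suc n) i @ u) / real (Suc n))" for n
    unfolding lyw by simp
  obtain L where LS: "(\<lambda>n. ln (S n) / real (Suc n)) \<longlonglongrightarrow> L" and Li: "lyap r N [i] = L / rb"
  proof (cases "\<bar>tr B\<bar> \<le> 2")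
    case True
    have "(\<lambda>n. ln (S n) / real (Suc n)) \<longlonglongrightarrow> 0" by (rule lim_ell[OF True a Sb(1) Sb(3)])
    moreover have "lyap r N [i] = 0 / rb" using sr_ell[OF dB True] by (simp add: lyap_single B_def)
    ultimately show ?thesis using that by blast
  next
    case False
    then obtain \<rho> \<mu> where rm: "\<rho> + \<mu> = tr B" "\<rho> * \<mu> = 1" "\<bar>\<rho>\<bar> > 1" "sr B = \<bar>\<rho>\<bar>"
      and f: "tr (G ** B) - \<mu> * tr G \<noteq> 0" using cond by (auto simp: B_def G_def)
    have "(\<lambda>n. ln (S n) / real (Suc n)) \<longlonglongrightarrow> ln \<bar>\<rho>\<bar>"
      by (rule lim_hyp[OF rm(1,2,3) a _ Sb(2) Sb(1) Sb(3)]) (use f a0 a1 in simp)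
    moreover have "lyap r N [i] = ln \<bar>\<rho>\<bar> / rb" using rm(4) by (simp add: lyap_single B_def rb_def)
    ultimately show ?thesis using that by blast
  qed
  have "(\<lambda>n. (ln (S n) / real (Suc n)) / (den r (replicate (Suc n) i @ u) / real (Suc n))) \<longlonglongrightarrow> L / rb"
    by (rule tendsto_divide[OF LS D]) (use rb0 in simp)
  then show ?thesis unfolding eq Li .
qed

lemma mu_small: "\<rho> * \<mu> = 1 \<Longrightarrow> \<bar>\<rho>\<bar> > 1 \<Longrightarrow> \<bar>(\<mu>::real)\<bar> < 1"
proof -
  assume a: "\<rho> * \<mu> = 1" "\<bar>\<rho>\<bar> > 1"
  then have "\<bar>\<rho>\<bar> * \<bar>\<mu>\<bar> = 1" by (metis abs_1 abs_mult)
  then show ?thesis using a(2) by (metis less_1_mult linorder_neqE_linordered_idom mult.commute mult_cancel_left1 mult_le_cancel_left1 not_one_less_zero abs_ge_zero order_less_le)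
qed

lemma fam2_M':
  assumes dG: "det G = 1" and rm: "\<rho> + \<mu> = tr B" and ne: "\<rho> \<noteq> \<mu>" and f: "tr (G ** B) - \<mu> * tr G = 0"
  shows "tr ((G ** G) ** B) - \<mu> * tr (G ** G) \<noteq> 0"
proof -
  have GG: "G ** G = tr G *\<^sub>R G - mat 1" using CH[of G] dG by simp
  have "tr ((G ** G) ** B) - \<mu> * tr (G ** G) = tr G * (tr (G ** B) - \<mu> * tr G) - (tr B - 2 * \<mu>)"
    unfolding GG by (simp add: mm_ldiff mm_lscale tr_diff tr_scale tr_mat1 algebra_simps)
  also have "\<dots> = - (\<rho> - \<mu>)" using f rm by simp
  finally show ?thesis using ne by simp
qed

lemma trace_PK:
  assumes dK: "det K = 1" and tP: "tr P = 1" and z: "tr (P ** K) = 0"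
  shows "tr (P ** (K ** K)) = -1"
proof -
  have KK: "K ** K = tr K *\<^sub>R K - mat 1" using CH[of K] dK by simp
  show ?thesis unfolding KK using z tP by (simp add: mm_rdiff mm_rscale tr_diff tr_scale)
qed

lemma select:
  fixes M M' :: "nat \<Rightarrow> nat \<Rightarrow> real^2^2"
  assumes dM: "\<forall>i\<in>{1,2,3}. \<forall>j\<in>{1,2,3}. det (M i j) = 1"
    and dM': "\<forall>i\<in>{1,2,3}. \<forall>j\<in>{1,2,3}. det (M' i j) = 1"
    and i: "i \<in> {1,2,3}" "i \<noteq> 1" and tB: "\<bar>tr (M i i)\<bar> \<le> 2" and tA: "\<bar>tr (M 1 1)\<bar> > 2"
  shows "\<exists>u. set u \<subseteq> {1,2,3} \<and> (\<forall>N. \<exists>k\<ge>N. \<bar>tr (exc M i u ** mpow (M i i) k)\<bar> > 2)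
           \<and> (\<bar>tr (M' i i)\<bar> \<le> 2 \<or> (\<exists>\<rho> \<mu>. \<rho> + \<mu> = tr (M' i i) \<and> \<rho> * \<mu> = 1 \<and> \<bar>\<rho>\<bar> > 1 \<and> sr (M' i i) = \<bar>\<rho>\<bar>
                 \<and> tr (exc M' i u ** M' i i) - \<mu> * tr (exc M' i u) \<noteq> 0))"
proof -
  define A where "A = M 1 1"
  define B where "B = M i i"
  define M1i where "M1i = M 1 i"
  define Mi1 where "Mi1 = M i 1"
  have dA: "det A = 1" and dB: "det B = 1" and d1i: "det M1i = 1" and di1: "det Mi1 = 1"
    using dM i unfolding A_def B_def M1i_def Mi1_def by blast+
  obtain \<rho> \<mu> where rm: "\<rho> + \<mu> = tr A" "\<rho> * \<mu> = 1" "\<bar>\<rho>\<bar> > 1"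
    using hyp_eigs[OF dA] tA unfolding A_def by blast
  have m1: "\<bar>\<mu>\<bar> < 1" by (rule mu_small[OF rm(2,3)])
  have ne: "\<rho> \<noteq> \<mu>" using m1 rm(3) by auto
  define Pu where "Pu = (1/(\<rho>-\<mu>)) *\<^sub>R (A - \<mu> *\<^sub>R mat 1)"
  define Ps where "Ps = (1/(\<rho>-\<mu>)) *\<^sub>R (\<rho> *\<^sub>R mat 1 - A)"
  have dec: "mpow A m = \<rho>^m *\<^sub>R Pu + \<mu>^m *\<^sub>R Ps" for m
    unfolding Pu_def Ps_def by (rule mpow_decomp[OF dA rm(1,2) ne])
  have dPu: "det Pu = 0" and tPu: "tr Pu = 1" unfolding Pu_def by (rule Pu_props[OF dA rm(1,2) ne])+
  define K where "K = Mi1 ** M1i"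
  have dK: "det K = 1" by (simp add: K_def det_mul d1i di1)
  obtain H u1 where H: "\<And>m. set (u1 m) \<subseteq> {1,2,3}"
      "\<And>m. exc M i (u1 m) = M1i ** mpow A m ** Mi1 ** H"
      "tr (M1i ** Pu ** Mi1 ** H) \<noteq> 0" "det H = 1"
  proof (cases "tr (Pu ** K) = 0")
    case False
    show ?thesis
    proof (rule that[of "\<lambda>m. replicate (Suc m) 1" "mat 1"])
      show "set (replicate (Suc m) 1) \<subseteq> {1,2,3}" for m by auto
      show "exc M i (replicate (Suc m) 1) = M1i ** mpow A m ** Mi1 ** mat 1" for m
        using exc_ones[of M i m] by (simp add: M1i_def A_def Mi1_def del: replicate_Suc)
      have "tr (M1i ** Pu ** Mi1 ** mat 1) = tr (Pu ** K)"
        unfolding K_def by (metis matrix_mul_rid matrix_mul_assoc tr_comm)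
      then show "tr (M1i ** Pu ** Mi1 ** mat 1) \<noteq> 0" using False by simp
      show "det (mat 1 :: real^2^2) = 1" by simp
    qed
  next
    case True
    show ?thesis
    proof (rule that[of "\<lambda>m. [1] @ i # replicate (Suc m) 1" "M1i ** Mi1"])
      show "set ([1] @ i # replicate (Suc m) 1) \<subseteq> {1,2,3}" for m using i by auto
      have e1: "exc M i [1] = M1i ** Mi1" by (simp add: exc_def M1i_def Mi1_def)
      show "exc M i ([1] @ i # replicate (Suc m) 1) = M1i ** mpow A m ** Mi1 ** (M1i ** Mi1)" for m
        unfolding exc_app e1 using exc_ones[of M i m] by (simp add: M1i_def A_def Mi1_def del: replicate_Suc)
      have "tr (M1i ** Pu ** Mi1 ** (M1i ** Mi1)) = tr (Pu ** (K ** K))"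
      proof -
        have "tr (M1i ** Pu ** Mi1 ** (M1i ** Mi1)) = tr (M1i ** (Pu ** (Mi1 ** M1i ** Mi1)))"
          by (simp add: matrix_mul_assoc)
        also have "\<dots> = tr ((Pu ** (Mi1 ** M1i ** Mi1)) ** M1i)" by (rule tr_comm)
        also have "\<dots> = tr (Pu ** (K ** K))" by (simp add: K_def matrix_mul_assoc)
        finally show ?thesis .
      qed
      also have "\<dots> = -1" by (rule trace_PK[OF dK tPu True])
      finally show "tr (M1i ** Pu ** Mi1 ** (M1i ** Mi1)) \<noteq> 0" by simp
      show "det (M1i ** Mi1) = 1" by (simp add: det_mul d1i di1)
    qed
  qed
  define R where "R = M1i ** Pu ** Mi1 ** H"
  define S where "S = M1i ** Ps ** Mi1 ** H"
  have dR: "det R = 0" by (simp add: R_def det_mul dPu)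
  define c0 where "c0 = tr R"
  have c0: "c0 \<noteq> 0" using H(3) by (simp add: c0_def R_def)
  have E: "exc M i (u1 m) = \<rho>^m *\<^sub>R R + \<mu>^m *\<^sub>R S" for m
    unfolding H(2) dec R_def S_def by (simp add: mm_ladd mm_radd mm_lscale mm_rscale)
  define c where "c k = tr (R ** mpow B k)" for k
  define d where "d k = tr (S ** mpow B k)" for k
  have cr: "lin_rec (tr B) c" unfolding c_def by (rule tr_rec[OF dB])
  have c00: "c 0 = c0" by (simp add: c_def c0_def)
  have RR: "R ** R = c0 *\<^sub>R R" using rank1_sq[OF dR] by (simp add: c0_def)
  define e where "e k = tr ((R ** S + S ** R) ** mpow B k)" for k
  define g where "g k = tr ((S ** S) ** mpow B k)" for k
  define u2 where "u2 m = u1 m @ i # u1 m" for m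
  have a1: "tr (exc M i (u1 m) ** mpow B k) = \<rho>^m * c k + \<mu>^m * d k" for m k
    unfolding E c_def d_def by (simp add: mm_ladd mm_lscale tr_add tr_scale)
  have rmm: "\<rho>^m * \<mu>^m = 1" for m using rm(2) by (metis power_mult_distrib power_one)
  have a2: "tr (exc M i (u2 m) ** mpow B k) = (\<rho>^(2*m) * c0) * c k + (e k + \<mu>^(2*m) * g k)" for m k
  proof -
    have "exc M i (u2 m) = exc M i (u1 m) ** exc M i (u1 m)" by (simp add: u2_def exc_app)
    also have "\<dots> = (\<rho>^m * \<rho>^m) *\<^sub>R (R ** R) + (\<rho>^m * \<mu>^m) *\<^sub>R (R ** S + S ** R) + (\<mu>^m * \<mu>^m) *\<^sub>R (S ** S)"
      unfolding E by (simp add: mm_ladd mm_radd mm_lscale mm_rscale algebra_simps scaleR_add_right)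
    also have "\<dots> = (\<rho>^(2*m) * c0) *\<^sub>R R + (R ** S + S ** R) + \<mu>^(2*m) *\<^sub>R (S ** S)"
      unfolding RR rmm by (simp add: power_mult power2_eq_square[symmetric] mult.commute)
    finally show ?thesis by (simp add: c_def e_def g_def mm_ladd mm_lscale tr_add tr_scale)
  qed
  have dr: "lin_rec (tr B) d" unfolding d_def by (rule tr_rec[OF dB])
  have tBB: "\<bar>tr B\<bar> \<le> 2" using tB by (simp add: B_def)
  obtain \<Lambda>1 where L1: "\<Lambda>1 > 0" "\<forall>l a. lin_rec (tr B) a \<longrightarrow> \<bar>l\<bar> \<ge> \<Lambda>1 \<longrightarrow> \<bar>a 0 - l * c 0\<bar> \<le> \<bar>d 0\<bar> + \<bar>d 1\<bar>
      \<longrightarrow> \<bar>a 1 - l * c 1\<bar> \<le> \<bar>d 0\<bar> + \<bar>d 1\<bar> \<longrightarrow> (\<forall>N. \<exists>k\<ge>N. \<bar>a k\<bar> > 2)"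
    using freq_big[OF tBB cr _, of "\<bar>d 0\<bar> + \<bar>d 1\<bar>"] c0 c00 by auto
  obtain \<Lambda>2 where L2: "\<Lambda>2 > 0" "\<forall>l a. lin_rec (tr B) a \<longrightarrow> \<bar>l\<bar> \<ge> \<Lambda>2 \<longrightarrow> \<bar>a 0 - l * c 0\<bar> \<le> \<bar>e 0\<bar> + \<bar>g 0\<bar> + \<bar>e 1\<bar> + \<bar>g 1\<bar>
      \<longrightarrow> \<bar>a 1 - l * c 1\<bar> \<le> \<bar>e 0\<bar> + \<bar>g 0\<bar> + \<bar>e 1\<bar> + \<bar>g 1\<bar> \<longrightarrow> (\<forall>N. \<exists>k\<ge>N. \<bar>a k\<bar> > 2)"
    using freq_big[OF tBB cr _, of "\<bar>e 0\<bar> + \<bar>g 0\<bar> + \<bar>e 1\<bar> + \<bar>g 1\<bar>"] c0 c00 by auto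
  obtain m where m: "\<bar>\<rho>\<bar>^m > max (max \<Lambda>1 (\<Lambda>2 / \<bar>c0\<bar>)) 1"
    using real_arch_pow[OF rm(3)] by blast
  have pm1: "\<bar>\<mu>^m\<bar> \<le> 1" "\<bar>\<mu>^(2*m)\<bar> \<le> 1" using m1 by (simp_all add: power_abs power_le_one)
  have fam1: "\<forall>N. \<exists>k\<ge>N. \<bar>tr (exc M i (u1 m) ** mpow B k)\<bar> > 2"
  proof -
    have "lin_rec (tr B) (\<lambda>k. tr (exc M i (u1 m) ** mpow B k))" by (rule tr_rec[OF dB])
    moreover have "\<bar>\<rho>^m\<bar> \<ge> \<Lambda>1" using m by (simp add: power_abs)
    moreover have "\<bar>\<mu>^m * d j\<bar> \<le> \<bar>d 0\<bar> + \<bar>d 1\<bar>" if "j \<le> 1" for j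
    proof -
      have "\<bar>\<mu>^m * d j\<bar> \<le> \<bar>d j\<bar>" using pm1 by (simp add: abs_mult mult_left_le_one_le)
      also have "\<bar>d j\<bar> \<le> \<bar>d 0\<bar> + \<bar>d 1\<bar>" using that by (cases j) auto
      finally show ?thesis .
    qed
    ultimately show ?thesis using L1(2)[rule_format, of "\<lambda>k. tr (exc M i (u1 m) ** mpow B k)" "\<rho>^m"]
      unfolding a1 by simp
  qed
  have fam2: "\<forall>N. \<exists>k\<ge>N. \<bar>tr (exc M i (u2 m) ** mpow B k)\<bar> > 2"
  proof -
    have "lin_rec (tr B) (\<lambda>k. tr (exc M i (u2 m) ** mpow B k))" by (rule tr_rec[OF dB])
    moreover have "\<bar>\<rho>^(2*m) * c0\<bar> \<ge> \<Lambda>2"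
    proof -
      have pm: "\<bar>\<rho>\<bar>^m \<ge> 1" "\<bar>\<rho>\<bar>^m \<ge> \<Lambda>2 / \<bar>c0\<bar>" using m by auto
      have "\<Lambda>2 \<le> \<bar>\<rho>\<bar>^m * \<bar>c0\<bar>" using pm(2) c0 by (simp add: field_simps)
      also have "\<dots> \<le> \<bar>\<rho>\<bar>^m * (\<bar>\<rho>\<bar>^m * \<bar>c0\<bar>)" using mult_right_mono[OF pm(1), of "\<bar>\<rho>\<bar>^m * \<bar>c0\<bar>"] by simp
      also have "\<dots> = \<bar>\<rho>^(2*m) * c0\<bar>" by (simp add: abs_mult power_abs mult_2 power_add)
      finally show ?thesis .
    qed
    moreover have "\<bar>e j + \<mu>^(2*m) * g j\<bar> \<le> \<bar>e 0\<bar> + \<bar>g 0\<bar> + \<bar>e 1\<bar> + \<bar>g 1\<bar>" if "j \<le> 1" for j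
    proof -
      have "\<bar>e j + \<mu>^(2*m) * g j\<bar> \<le> \<bar>e j\<bar> + \<bar>g j\<bar>"
      proof -
        have "\<bar>\<mu>^(2*m) * g j\<bar> \<le> \<bar>g j\<bar>" using pm1(2) by (simp add: abs_mult mult_left_le_one_le)
        then show ?thesis using abs_triangle_ineq[of "e j" "\<mu>^(2*m) * g j"] by linarith
      qed
      also have "\<dots> \<le> \<bar>e 0\<bar> + \<bar>g 0\<bar> + \<bar>e 1\<bar> + \<bar>g 1\<bar>" using that by (cases j) auto
      finally show ?thesis .
    qed
    ultimately show ?thesis using L2(2)[rule_format, of "\<lambda>k. tr (exc M i (u2 m) ** mpow B k)" "\<rho>^(2*m) * c0"]
      unfolding a2 by simp
  qed
  have su1: "set (u1 m) \<subseteq> {1,2,3}" by (rule H(1))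
  have su2: "set (u2 m) \<subseteq> {1,2,3}" using H(1)[of m] i by (auto simp: u2_def)
  show ?thesis
  proof (cases "\<bar>tr (M' i i)\<bar> \<le> 2")
    case True
    then show ?thesis using su1 fam1 unfolding B_def by blast
  next
    case False
    have dB': "det (M' i i) = 1" using dM' i by blast
    obtain \<rho>' \<mu>' where rm': "\<rho>' + \<mu>' = tr (M' i i)" "\<rho>' * \<mu>' = 1" "\<bar>\<rho>'\<bar> > 1" "sr (M' i i) = \<bar>\<rho>'\<bar>"
      using hyp_eigs[OF dB'] False by auto
    have ne': "\<rho>' \<noteq> \<mu>'" using mu_small[OF rm'(2,3)] rm'(3) by auto
    define G' where "G' = exc M' i (u1 m)"
    have dG': "det G' = 1" unfolding G'_def by (rule det_exc[OF dM' su1 i(1)])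
    show ?thesis
    proof (cases "tr (G' ** M' i i) - \<mu>' * tr G' = 0")
      case False
      then show ?thesis using su1 fam1 rm' unfolding B_def G'_def by blast
    next
      case True
      have "exc M' i (u2 m) = G' ** G'" by (simp add: u2_def exc_app G'_def)
      then have "tr (exc M' i (u2 m) ** M' i i) - \<mu>' * tr (exc M' i (u2 m)) \<noteq> 0"
        using fam2_M'[OF dG' rm'(1) ne' True] by simp
      then show ?thesis using su2 fam2 rm' unfolding B_def by blast
    qed
  qed
qed

theorem proposition2p4:
  fixes r :: "(int \<Rightarrow> nat) \<Rightarrow> real" and M M' :: "nat \<Rightarrow> nat \<Rightarrow> real^2^2"
  assumes "continuous_on Sigma3 r"
    and "\<forall>x\<in>Sigma3. r x > 0"
    and "\<forall>i\<in>{1,2,3}. \<forall>j\<in>{1,2,3}. det (M i j) = 1"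
    and "\<forall>i\<in>{1,2,3}. \<forall>j\<in>{1,2,3}. det (M' i j) = 1"
    and "lyap r M [1] \<noteq> 0"
  shows "\<forall>i\<in>{1,2,3}. \<forall>e>0. \<exists>w. w \<noteq> [] \<and> set w \<subseteq> {1,2,3}
           \<and> \<bar>lyap r M w - lyap r M [i]\<bar> < e
           \<and> \<bar>lyap r M' w - lyap r M' [i]\<bar> < e
           \<and> lyap r M w \<noteq> 0"
proof (intro ballI allI impI)
  note c = assms(1) and pos = assms(2) and dM = assms(3) and dM' = assms(4)
  fix i :: nat and e :: real assume i: "i \<in> {1,2,3}" and e: "e > 0"
  show "\<exists>w. w \<noteq> [] \<and> set w \<subseteq> {1,2,3} \<and> \<bar>lyap r M w - lyap r M [i]\<bar> < e
           \<and> \<bar>lyap r M' w - lyap r M' [i]\<bar> < e \<and> lyap r M w \<noteq> 0"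
  proof (cases "lyap r M [i] = 0")
    case False
    then show ?thesis using i e by (intro exI[of _ "[i]"]) auto
  next
    case True
    have i1: "i \<noteq> 1" using True assms(5) by auto
    have rb: "r (\<lambda>_. i) > 0" using pos i by (simp add: Sigma3_def)
    have dB: "det (M i i) = 1" using dM i by blast
    have dA: "det (M 1 1) = 1" using dM by simp
    have "ln (sr (M i i)) = 0" using True rb by (simp add: lyap_single)
    moreover have "sr (M i i) \<ge> 1" using sr_bounds[OF dB] by simp
    ultimately have "sr (M i i) = 1" by simp
    then have tB: "\<bar>tr (M i i)\<bar> \<le> 2" using sr_gt1[OF dB] by fastforce
    have tA: "\<bar>tr (M 1 1)\<bar> > 2"
    proof (rule ccontr)
      assume "\<not> ?thesis"
      then have "sr (M 1 1) = 1" using sr_ell[OF dA] by simp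
      then show False using assms(5) by (simp add: lyap_single)
    qed
    obtain u where u: "set u \<subseteq> {1,2,3}" and fr: "\<forall>N. \<exists>k\<ge>N. \<bar>tr (exc M i u ** mpow (M i i) k)\<bar> > 2"
      and cond': "\<bar>tr (M' i i)\<bar> \<le> 2 \<or> (\<exists>\<rho> \<mu>. \<rho> + \<mu> = tr (M' i i) \<and> \<rho> * \<mu> = 1 \<and> \<bar>\<rho>\<bar> > 1 \<and> sr (M' i i) = \<bar>\<rho>\<bar>
                 \<and> tr (exc M' i u ** M' i i) - \<mu> * tr (exc M' i u) \<noteq> 0)"
      using select[OF dM dM' i i1 tB tA] by blast
    have L1: "(\<lambda>n. lyap r M (replicate (Suc n) i @ u)) \<longlonglongrightarrow> lyap r M [i]"
      by (rule conv_family[OF c pos dM u i]) (use tB in simp)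
    have L2: "(\<lambda>n. lyap r M' (replicate (Suc n) i @ u)) \<longlonglongrightarrow> lyap r M' [i]"
      by (rule conv_family[OF c pos dM' u i cond'])
    obtain N1 where N1: "\<forall>n\<ge>N1. \<bar>lyap r M (replicate (Suc n) i @ u) - lyap r M [i]\<bar> < e"
      using L1 e unfolding lim_sequentially dist_real_def by blast
    obtain N2 where N2: "\<forall>n\<ge>N2. \<bar>lyap r M' (replicate (Suc n) i @ u) - lyap r M' [i]\<bar> < e"
      using L2 e unfolding lim_sequentially dist_real_def by blast
    obtain k where k: "k \<ge> max N1 N2" "\<bar>tr (exc M i u ** mpow (M i i) k)\<bar> > 2" using fr by blast
    define w where "w = replicate (Suc k) i @ u"
    have wne: "w \<noteq> []" and ws: "set w \<subseteq> {1,2,3}" using u i by (auto simp: w_def)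
    have dX: "det (exc M i u ** mpow (M i i) k) = 1"
      by (simp add: det_mul det_exc[OF dM u i] det_mpow dB)
    have "sr (exc M i u ** mpow (M i i) k) > 1" by (rule sr_gt1[OF dX k(2)])
    then have "ln (sr (exc M i u ** mpow (M i i) k)) > 0" by simp
    moreover have "den r w > 0" by (rule den_pos[OF pos wne ws])
    ultimately have "lyap r M w > 0"
      unfolding lyap_den w_def cpow_word by simp
    then show ?thesis using wne ws N1 N2 k(1) unfolding w_def by (intro exI[of _ w]) (auto simp: w_def)
  qed
qed


end
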